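(* Let $s>3/2$. For every $\delta>0$ there exists $C_\delta>0$ such that for all $\alpha,M\in\mathbb{R}$ and all $u_1,u_2,u_3\in H^s(\mathbb{R}^2)$, $\|T^{\alpha,M}(u_1,u_2,u_3)\|_{H^s}\le C_\delta\langle\alpha\rangle^{\delta}\langle M\rangle^{1/2+\delta}\prod_{j=1}^3\|u_j\|_{H^s}$.
   Context: (Setting of the modified Zakharov–Kuznetsov equation in symmetrized coordinates $u_t+u_{xxx}+u_{yyy}=(\partial_x+\partial_y)(u^3)$.) $\langle a\rangle=(1+|a|^2)^{1/2}$. Frequencies $\xi=(x,y)$, $\xi_j=(x_j,y_j)\in\mathbb{R}^2$, $\tilde x_j=x-x_j$, $\tilde y_j=y-y_j$; $\Xi=(\xi,\xi_1,\xi_2,\xi_3)$, $\Phi(\Xi)=\tilde x_1\tilde x_2\tilde x_3+\tilde y_1\tilde y_2\tilde y_3$, $m(\Xi)=x+y$ (the symbol of $\partial_x+\partial_y$ up to a factor $i$), and $\mathcal{F}[T^{\alpha,M}(u_1,u_2,u_3)](\xi)=\int_{\xi_1+\xi_2+\xi_3=\xi,\ |\Phi(\Xi)-\alpha|<M}m(\Xi)\hat u_1(\xi_1)\hat u_2(\xi_2)\hat u_3(\xi_3)\,d\xi_1d\xi_2$. *)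

theory Defs
  imports "HOL-Analysis.Analysis"
begin

text \<open>An element u of H^s(R^2)
  is represented by its Fourier transform f = u-hat; the H^s norm is
  (integral of jb(xi)^(2s) |f(xi)|^2)^(1/2).\<close>

definition jb :: "real \<Rightarrow> real" where
  "jb a = sqrt (1 + a\<^sup>2)"

definition jb2 :: "real \<times> real \<Rightarrow> real" where
  "jb2 \<xi> = sqrt (1 + (norm \<xi>)\<^sup>2)"

definition Phi :: "real \<times> real \<Rightarrow> real \<times> real \<Rightarrow> real \<times> real \<Rightarrow> real \<times> real \<Rightarrow> real" where
  "Phi \<xi> \<xi>1 \<xi>2 \<xi>3 =
     (fst \<xi> - fst \<xi>1) * (fst \<xi> - fst \<xi>2) * (fst \<xi> - fst \<xi>3)
   + (snd \<xi> - snd \<xi>1) * (snd \<xi> - snd \<xi>2) * (snd \<xi> - snd \<xi>3)"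

definition msym :: "real \<times> real \<Rightarrow> real" where
  "msym \<xi> = fst \<xi> + snd \<xi>"

text \<open>Fourier transform of T^{alpha,M}(u1,u2,u3) at xi, written in terms of
  f_j = u_j-hat; integration over (xi1,xi2) with xi3 = xi - xi1 - xi2.\<close>
definition T_hat ::
  "real \<Rightarrow> real \<Rightarrow> (real \<times> real \<Rightarrow> complex) \<Rightarrow> (real \<times> real \<Rightarrow> complex)
     \<Rightarrow> (real \<times> real \<Rightarrow> complex) \<Rightarrow> real \<times> real \<Rightarrow> complex" where
  "T_hat \<alpha> M f1 f2 f3 \<xi> =
     (\<integral>p. (indicator {p. \<bar>Phi \<xi> (fst p) (snd p) (\<xi> - fst p - snd p) - \<alpha>\<bar> < M} p :: complex)
           * complex_of_real (msym \<xi>) * f1 (fst p) * f2 (snd p) * f3 (\<xi> - fst p - snd p)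
       \<partial>(lborel :: ((real \<times> real) \<times> (real \<times> real)) measure))"

definition Hs_sq :: "real \<Rightarrow> (real \<times> real \<Rightarrow> complex) \<Rightarrow> ennreal" where
  "Hs_sq s f = (\<integral>\<^sup>+ \<xi>. ennreal (jb2 \<xi> powr (2 * s) * (cmod (f \<xi>))\<^sup>2) \<partial>lborel)"

definition Hs_hat :: "real \<Rightarrow> (real \<times> real \<Rightarrow> complex) set" where
  "Hs_hat s = {f. f \<in> borel_measurable lborel \<and> Hs_sq s f < \<infinity>}"

definition Hs_norm :: "real \<Rightarrow> (real \<times> real \<Rightarrow> complex) \<Rightarrow> real" where
  "Hs_norm s f = sqrt (enn2real (Hs_sq s f))"

end

theory Submission
  imports Defs
begin


lemma jb2_sq: "(jb2 v)\<^sup>2 = 1 + (fst v)\<^sup>2 + (snd v)\<^sup>2"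
  by (cases v) (simp add: jb2_def norm_Pair)

lemma jb2_pos: "jb2 v > 0" by (simp add: jb2_def add_pos_nonneg)
lemma jb2_ge1: "jb2 v \<ge> 1" by (simp add: jb2_def)
lemma jb_pos: "jb t > 0" by (simp add: jb_def add_pos_nonneg)
lemma jb_nz[simp]: "jb t \<noteq> 0" using jb_pos[of t] by simp
lemma jb2_nz[simp]: "jb2 t \<noteq> 0" using jb2_pos[of t] by simp
lemma jb_ge1: "jb t \<ge> 1" by (simp add: jb_def)
lemma jb2_ge_norm: "jb2 v \<ge> norm v"
  by (simp add: jb2_def real_le_rsqrt)
lemma jb2_ge_fst: "jb2 v \<ge> jb (fst v)"
  by (cases v) (simp add: jb2_def jb_def norm_Pair)
lemma jb2_ge_snd: "jb2 v \<ge> jb (snd v)"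
  by (cases v) (simp add: jb2_def jb_def norm_Pair)
lemma jb_ge_abs: "jb t \<ge> \<bar>t\<bar>"
  by (simp add: jb_def real_le_rsqrt)
lemma jb2_sq_le: "(jb2 v)\<^sup>2 \<le> 2 * (norm v)\<^sup>2" if "norm v \<ge> 1"
  using that by (simp add: jb2_def)

lemma jb2_split_powr:
  assumes "a \<ge> 0" "b \<ge> 0"
  shows "jb2 v powr (-(a+b)) \<le> jb (fst v) powr (-a) * jb (snd v) powr (-b)"
proof -
  have "jb (fst v) powr a * jb (snd v) powr b \<le> jb2 v powr a * jb2 v powr b"
    by (intro mult_mono powr_mono2) (use assms jb2_ge_fst jb2_ge_snd jb_pos in \<open>auto intro: less_imp_le\<close>)
  also have "\<dots> = jb2 v powr (a+b)" by (simp add: powr_add)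
  finally have *: "jb (fst v) powr a * jb (snd v) powr b \<le> jb2 v powr (a+b)" .
  have "jb2 v powr (-(a+b)) = inverse (jb2 v powr (a+b))" by (rule powr_minus)
  also have "\<dots> \<le> inverse (jb (fst v) powr a * jb (snd v) powr b)"
    by (rule le_imp_inverse_le[OF *]) simp
  also have "\<dots> = jb (fst v) powr (-a) * jb (snd v) powr (-b)"
    by (simp add: powr_minus)
  finally show ?thesis .
qed

lemma jb_powr_int_finite:
  assumes "p > 1"
  shows "(\<integral>\<^sup>+ t. ennreal (jb t powr (-p)) \<partial>lborel) < \<infinity>"
proof -
  let ?g = "\<lambda>t::real. indicator {1..} t * t powr (-p)"
  let ?h = "\<lambda>t::real. indicator {-1..1::real} t :: real"
  have g_int: "(\<integral>\<^sup>+ t. ennreal (?g t) \<partial>lborel) = ennreal (1 / (p - 1))"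
  proof -
    have "((\<lambda>t. t powr (-p)) has_integral -(1 powr (-p+1)) / (-p+1)) {1..}"
      by (rule has_integral_powr_to_inf) (use assms in auto)
    then have "((\<lambda>t. t powr (-p)) has_integral 1 / (p - 1)) {1..}"
      using assms by (simp add: minus_divide_right)
    from nn_integral_has_integral_lebesgue[OF _ this]
    have "integral\<^sup>N lborel (\<lambda>x. indicator {1..} x * x powr (-p)) = ennreal (1/(p-1))"
      by simp
    then show ?thesis by (simp add: ennreal_indicator)
  qed
  have gm: "?g \<in> borel_measurable borel" by measurable
  have "(\<integral>\<^sup>+ t. ennreal (?g (0 + (-1) * t)) \<partial>lborel) = (\<integral>\<^sup>+ t. ennreal (?g t) \<partial>lborel)"
    using nn_integral_real_affine[of "\<lambda>t. ennreal (?g t)" "-1" 0] gm by simp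
  then have g2: "(\<integral>\<^sup>+ t. ennreal (?g (- t)) \<partial>lborel) = ennreal (1/(p-1))"
    using g_int by simp
  have ptr: "jb t powr (-p) \<le> ?h t + ?g t + ?g (-t)" for t
  proof -
    have "1 \<le> jb t powr p" by (rule ge_one_powr_ge_zero) (use assms jb_ge1 in auto)
    then have jp: "jb t powr (-p) \<le> 1" by (simp add: powr_minus inverse_le_1_iff)
    show ?thesis
    proof (cases "\<bar>t\<bar> \<le> 1")
      case True then show ?thesis using jp
        by (auto simp: indicator_def)
    next
      case False
      have "jb t powr (-p) \<le> \<bar>t\<bar> powr (-p)"
        using False jb_ge_abs[of t] assms by (intro powr_mono2') auto
      then show ?thesis
        using False by (cases "t \<ge> 0") (auto simp: indicator_def)
    qed
  qed
  have pt: "ennreal (jb t powr (-p)) \<le> ennreal (?h t) + ennreal (?g t) + ennreal (?g (-t))" for t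
    using ptr[of t] by (simp add: ennreal_plus[symmetric] indicator_def del: ennreal_plus)
  have "(\<integral>\<^sup>+ t. ennreal (jb t powr (-p)) \<partial>lborel) \<le>
        (\<integral>\<^sup>+ t. ennreal (?h t) + ennreal (?g t) + ennreal (?g (-t)) \<partial>lborel)"
    by (rule nn_integral_mono) (rule pt)
  also have "\<dots> = (\<integral>\<^sup>+ t. ennreal (?h t) \<partial>lborel) + (\<integral>\<^sup>+ t. ennreal (?g t) \<partial>lborel)
        + (\<integral>\<^sup>+ t. ennreal (?g (-t)) \<partial>lborel)"
    apply (subst nn_integral_add)
    apply measurable
    apply (subst nn_integral_add)
    apply measurable
    done
  also have "\<dots> < \<infinity>"
  proof -
    have i1: "(\<integral>\<^sup>+ t. ennreal (?h t) \<partial>lborel) < \<infinity>"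
      by (simp add: ennreal_indicator)
    show ?thesis using i1 g_int g2 by (simp only: ennreal_add_less_top) simp
  qed
  finally show ?thesis .
qed



lemma fst_borel[measurable]: "fst \<in> borel_measurable (borel :: ('a::euclidean_space \<times> 'b::euclidean_space) measure)"
  by (intro borel_measurable_continuous_onI continuous_intros)
lemma snd_borel[measurable]: "snd \<in> borel_measurable (borel :: ('a::euclidean_space \<times> 'b::euclidean_space) measure)"
  by (intro borel_measurable_continuous_onI continuous_intros)
lemma swap_borel: "(\<lambda>v::('a::euclidean_space \<times> 'b::euclidean_space). (snd v, fst v)) \<in> borel \<rightarrow>\<^sub>M borel"
  by (intro borel_measurable_continuous_onI continuous_intros)

lemma nn_integral_pair_fst:
  fixes f :: "('a::euclidean_space \<times> 'b::euclidean_space) \<Rightarrow> ennreal"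
  assumes "f \<in> borel_measurable borel"
  shows "(\<integral>\<^sup>+ v. f v \<partial>lborel) = (\<integral>\<^sup>+ x. \<integral>\<^sup>+ y. f (x, y) \<partial>lborel \<partial>lborel)"
proof -
  have m: "f \<in> borel_measurable (lborel \<Otimes>\<^sub>M lborel)"
    using assms by (simp add: lborel_prod)
  show ?thesis
    by (subst lborel_prod[symmetric]) (rule lborel.nn_integral_fst[OF m, symmetric])
qed

lemma nn_integral_pair_snd:
  fixes f :: "('a::euclidean_space \<times> 'b::euclidean_space) \<Rightarrow> ennreal"
  assumes "f \<in> borel_measurable borel"
  shows "(\<integral>\<^sup>+ v. f v \<partial>lborel) = (\<integral>\<^sup>+ y. \<integral>\<^sup>+ x. f (x, y) \<partial>lborel \<partial>lborel)"
proof -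
  have m: "f \<in> borel_measurable (lborel \<Otimes>\<^sub>M lborel)"
    using assms by (simp add: lborel_prod)
  show ?thesis
    by (subst lborel_prod[symmetric]) (rule lborel_pair.nn_integral_snd[OF m, symmetric])
qed

lemma nn_integral_swap_pair:
  fixes f :: "('a::euclidean_space \<times> 'a) \<Rightarrow> ennreal"
  assumes [measurable]: "f \<in> borel_measurable borel"
  shows "(\<integral>\<^sup>+ v. f (snd v, fst v) \<partial>lborel) = (\<integral>\<^sup>+ v. f v \<partial>lborel)"
proof -
  have m: "(\<lambda>v. f (snd v, fst v)) \<in> borel_measurable borel"
    using measurable_compose[OF swap_borel assms] by (simp add: o_def)
  have "(\<integral>\<^sup>+ v. f (snd v, fst v) \<partial>lborel) = (\<integral>\<^sup>+ x. \<integral>\<^sup>+ y. f (y, x) \<partial>lborel \<partial>lborel)"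
    using nn_integral_pair_fst[OF m] by simp
  also have "\<dots> = (\<integral>\<^sup>+ v. f v \<partial>lborel)"
    by (subst nn_integral_pair_snd) auto
  finally show ?thesis .
qed

lemma nn_integral_prod_split:
  fixes f g :: "'a::euclidean_space \<Rightarrow> ennreal"
  assumes [measurable]: "f \<in> borel_measurable borel" "g \<in> borel_measurable borel"
  shows "(\<integral>\<^sup>+ v. f (fst v) * g (snd v) \<partial>(lborel::('a\<times>'a) measure)) = (\<integral>\<^sup>+ x. f x \<partial>lborel) * (\<integral>\<^sup>+ y. g y \<partial>lborel)"
proof -
  have "(\<integral>\<^sup>+ v. f (fst v) * g (snd v) \<partial>(lborel::('a\<times>'a) measure)) = (\<integral>\<^sup>+ x. \<integral>\<^sup>+ y. f x * g y \<partial>lborel \<partial>lborel)"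
  proof -
    have m: "(\<lambda>v. f (fst v) * g (snd v)) \<in> borel_measurable (borel :: ('a\<times>'a) measure)" by measurable
    show ?thesis using nn_integral_pair_fst[OF m] by simp
  qed
  also have "\<dots> = (\<integral>\<^sup>+ x. f x * (\<integral>\<^sup>+ y. g y \<partial>lborel) \<partial>lborel)"
    by (simp add: nn_integral_cmult)
  also have "\<dots> = (\<integral>\<^sup>+ x. f x \<partial>lborel) * (\<integral>\<^sup>+ y. g y \<partial>lborel)"
    by (simp add: nn_integral_multc)
  finally show ?thesis .
qed

lemma jb2_powr_int_finite:
  assumes "p > 2"
  shows "(\<integral>\<^sup>+ v. ennreal (jb2 v powr (-p)) \<partial>lborel) < \<infinity>"
proof -
  have "(\<integral>\<^sup>+ v. ennreal (jb2 v powr (-p)) \<partial>lborel)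
      \<le> (\<integral>\<^sup>+ v. ennreal (jb (fst v) powr (-(p/2))) * ennreal (jb (snd v) powr (-(p/2))) \<partial>lborel)"
  proof (rule nn_integral_mono)
    fix v :: "real \<times> real"
    have "jb2 v powr (-(p/2 + p/2)) \<le> jb (fst v) powr (-(p/2)) * jb (snd v) powr (-(p/2))"
      by (rule jb2_split_powr) (use assms in auto)
    then show "ennreal (jb2 v powr (-p)) \<le> ennreal (jb (fst v) powr (-(p/2))) * ennreal (jb (snd v) powr (-(p/2)))"
      by (simp add: ennreal_mult[symmetric] ennreal_leI)
  qed
  also have "\<dots> = (\<integral>\<^sup>+ x. ennreal (jb x powr (-(p/2))) \<partial>lborel) * (\<integral>\<^sup>+ y. ennreal (jb y powr (-(p/2))) \<partial>lborel)"
    by (rule nn_integral_prod_split) (auto simp: jb_def)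
  also have "\<dots> < \<infinity>"
    using jb_powr_int_finite[of "p/2"] assms by (simp add: ennreal_mult_less_top)
  finally show ?thesis .
qed

lemma diam_nn_integral:
  fixes S :: "real set"
  assumes "\<And>t u. t \<in> S \<Longrightarrow> u \<in> S \<Longrightarrow> \<bar>t - u\<bar> \<le> d" "d \<ge> 0"
  shows "(\<integral>\<^sup>+ t. indicator S t \<partial>lborel) \<le> ennreal (2 * d)"
proof (cases "S = {}")
  case True then show ?thesis by simp
next
  case False
  then obtain t0 where t0: "t0 \<in> S" by auto
  have "S \<subseteq> {t0 - d .. t0 + d}" using assms(1)[OF _ t0] by (force simp: abs_le_iff)
  then have "(\<integral>\<^sup>+ t. indicator S t \<partial>lborel) \<le> (\<integral>\<^sup>+ t. indicator {t0 - d .. t0 + d} t \<partial>lborel)"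
    by (intro nn_integral_mono) (auto simp: indicator_def)
  also have "\<dots> = ennreal (2 * d)" using assms(2) by simp
  finally show ?thesis .
qed

lemma slice_identity:
  fixes x x2 c u t :: real
  defines "g \<equiv> \<lambda>t. (x - t) * (x - x2) * (t + x2) + c"
  shows "g u - g t = (u - t) * (x - x2) * (x - x2 - u - t)"
  unfolding g_def by (simp add: algebra_simps power2_eq_square)

lemma slice_linear:
  fixes x x2 c \<alpha> M N :: real
  defines "g \<equiv> \<lambda>t. (x - t) * (x - x2) * (t + x2) + c"
  assumes N: "N > 0" and x2: "\<bar>x2\<bar> \<le> N/8" and x: "x\<^sup>2 \<ge> N\<^sup>2/2" and M: "M \<ge> 0"
  shows "(\<integral>\<^sup>+ t. indicator {t. \<bar>t\<bar> \<le> N/8 \<and> \<bar>g t - \<alpha>\<bar> < M} t \<partial>lborel) \<le> ennreal (28 * M / N\<^sup>2)"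
proof -
  have xa: "\<bar>x\<bar> \<ge> N * 0.7"
  proof -
    have "(N*0.7)\<^sup>2 = (49/100) * N\<^sup>2" by (simp add: power2_eq_square)
    then have "(N*0.7)\<^sup>2 \<le> x\<^sup>2" using x N zero_le_power2[of N] by linarith
    then have "\<bar>N*0.7\<bar> \<le> \<bar>x\<bar>" by (simp only: abs_le_square_iff)
    then show ?thesis using N by simp
  qed
  have key: "\<bar>g u - g t\<bar> \<ge> N\<^sup>2/7 * \<bar>u - t\<bar>" if "\<bar>u\<bar> \<le> N/8" "\<bar>t\<bar> \<le> N/8" for u t
  proof -
    have a1: "\<bar>x - x2\<bar> \<ge> N/2" using xa x2 by linarith
    have a2: "\<bar>x - x2 - u - t\<bar> \<ge> N * 0.3" using xa x2 that by linarith
    have "g u - g t = (u - t) * (x - x2) * (x - x2 - u - t)"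
      using slice_identity[of x u x2 c t] by (simp add: g_def)
    then have "\<bar>g u - g t\<bar> = \<bar>u - t\<bar> * \<bar>x - x2\<bar> * \<bar>x - x2 - u - t\<bar>"
      by (simp add: abs_mult)
    also have "\<dots> \<ge> \<bar>u - t\<bar> * (N/2) * (N * 0.3)"
      by (intro mult_mono a1 a2 mult_nonneg_nonneg) (use N in auto)
    also have "\<bar>u - t\<bar> * (N/2) * (N * 0.3) = N\<^sup>2 * 0.15 * \<bar>u - t\<bar>"
      by (simp add: power2_eq_square algebra_simps)
    also have "N\<^sup>2 * 0.15 * \<bar>u - t\<bar> \<ge> N\<^sup>2/7 * \<bar>u - t\<bar>"
      by (intro mult_right_mono) auto
    finally show ?thesis .
  qed
  show ?thesis
  proof -
    have "(\<integral>\<^sup>+ t. indicator {t. \<bar>t\<bar> \<le> N/8 \<and> \<bar>g t - \<alpha>\<bar> < M} t \<partial>lborel) \<le> ennreal (2 * (14 * M / N\<^sup>2))"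
    proof (rule diam_nn_integral)
      fix t u assume t: "t \<in> {t. \<bar>t\<bar> \<le> N/8 \<and> \<bar>g t - \<alpha>\<bar> < M}" and u: "u \<in> {t. \<bar>t\<bar> \<le> N/8 \<and> \<bar>g t - \<alpha>\<bar> < M}"
      then have "\<bar>g t - g u\<bar> < 2 * M" by auto
      moreover have "\<bar>g t - g u\<bar> \<ge> N\<^sup>2/7 * \<bar>t - u\<bar>" using key t u by auto
      ultimately have "N\<^sup>2/7 * \<bar>t - u\<bar> \<le> 2 * M" by linarith
      then show "\<bar>t - u\<bar> \<le> 14 * M / N\<^sup>2" using N by (simp add: field_simps)
    qed (use M N in auto)
    then show ?thesis by simp
  qed
qed

lemma slice_parab:
  fixes x x2 c \<alpha> M :: real
  defines "g \<equiv> \<lambda>t. (x - t) * (x - x2) * (t + x2) + c"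
  assumes a: "x - x2 \<noteq> 0" and M: "M \<ge> 0"
  shows "(\<integral>\<^sup>+ t. indicator {t. \<bar>g t - \<alpha>\<bar> < M} t \<partial>lborel) \<le> ennreal (4 * sqrt (2 * M / \<bar>x - x2\<bar>))"
proof -
  define a where "a = x - x2"
  define t0 where "t0 = a / 2"
  define S where "S = {t. \<bar>g t - \<alpha>\<bar> < M}"
  define d where "d = sqrt (2 * M / \<bar>a\<bar>)"
  have apos: "\<bar>a\<bar> > 0" using a by (simp add: a_def)
  have side: "\<bar>t - u\<bar> \<le> d" if "t \<in> S" "u \<in> S" and same: "(t - t0) * (u - t0) \<ge> 0" for t u
  proof -
    have "\<bar>g t - g u\<bar> < 2 * M" using that by (auto simp: S_def)
    moreover have "\<bar>g t - g u\<bar> = \<bar>a\<bar> * \<bar>t - u\<bar> * \<bar>(t - t0) + (u - t0)\<bar>"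
    proof -
      have "g t - g u = (t - u) * a * (-((t - t0) + (u - t0)))"
        using slice_identity[of x t x2 c u] by (simp add: g_def a_def t0_def algebra_simps)
      then show ?thesis by (simp add: abs_mult abs_minus_commute)
    qed
    moreover have ge: "\<bar>(t - t0) + (u - t0)\<bar> \<ge> \<bar>t - u\<bar>"
      using same unfolding zero_le_mult_iff by (elim disjE) (simp_all add: abs_if)
    moreover have "\<bar>a\<bar> * \<bar>t - u\<bar> * \<bar>t - u\<bar> \<le> \<bar>a\<bar> * \<bar>t - u\<bar> * \<bar>(t - t0) + (u - t0)\<bar>"
      by (intro mult_left_mono ge) auto
    ultimately have "\<bar>a\<bar> * \<bar>t - u\<bar> * \<bar>t - u\<bar> < 2 * M"
      by linarith
    then have "(\<bar>t - u\<bar>)\<^sup>2 \<le> 2 * M / \<bar>a\<bar>" using apos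
      by (simp add: field_simps power2_eq_square)
    then show ?thesis unfolding d_def by (simp add: real_le_rsqrt)
  qed
  have dpos: "d \<ge> 0" unfolding d_def using M apos by simp
  have i1: "(\<integral>\<^sup>+ t. indicator (S \<inter> {t0..}) t \<partial>lborel) \<le> ennreal (2 * d)"
    by (rule diam_nn_integral) (auto intro!: side dpos)
  have i2: "(\<integral>\<^sup>+ t. indicator (S \<inter> {..<t0}) t \<partial>lborel) \<le> ennreal (2 * d)"
    by (rule diam_nn_integral) (auto intro!: side dpos mult_nonpos_nonpos)
  have "(\<integral>\<^sup>+ t. indicator S t \<partial>lborel) \<le> (\<integral>\<^sup>+ t. indicator (S \<inter> {t0..}) t + indicator (S \<inter> {..<t0}) t \<partial>lborel)"
    by (intro nn_integral_mono) (auto simp: indicator_def)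
  also have "\<dots> = (\<integral>\<^sup>+ t. indicator (S \<inter> {t0..}) t \<partial>lborel) + (\<integral>\<^sup>+ t. indicator (S \<inter> {..<t0}) t \<partial>lborel)"
  proof -
    have Sm[measurable]: "S \<in> sets borel" unfolding S_def g_def by measurable
    show ?thesis by (rule nn_integral_add) auto
  qed
  also have "\<dots> \<le> ennreal (2 * d) + ennreal (2 * d)" using i1 i2 by (rule add_mono)
  also have "\<dots> = ennreal (4 * d)" using dpos by (simp add: ennreal_plus[symmetric] del: ennreal_plus)
  finally show ?thesis unfolding S_def d_def a_def .
qed



definition Aset :: "real \<times> real \<Rightarrow> real \<Rightarrow> real \<Rightarrow> ((real \<times> real) \<times> (real \<times> real)) set" where
  "Aset \<xi> \<alpha> M = {p. \<bar>Phi \<xi> (fst p) (snd p) (\<xi> - fst p - snd p) - \<alpha>\<bar> < M}"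

definition wB :: "real \<Rightarrow> real \<times> real \<Rightarrow> real" where
  "wB q v = jb2 v powr (-q)"

lemma wB_nonneg[simp]: "wB q v \<ge> 0" by (simp add: wB_def)

lemma pair_left_borel: "(\<lambda>x. (x, c)) \<in> borel \<rightarrow>\<^sub>M (borel :: ('a::euclidean_space \<times> 'b::euclidean_space) measure)"
  by (intro borel_measurable_continuous_onI continuous_intros)
lemma pair_right_borel: "(\<lambda>x. (c, x)) \<in> borel \<rightarrow>\<^sub>M (borel :: ('a::euclidean_space \<times> 'b::euclidean_space) measure)"
  by (intro borel_measurable_continuous_onI continuous_intros)

lemma Phi_meas[measurable]: "(\<lambda>p. Phi \<xi> (fst p) (snd p) (\<xi> - fst p - snd p)) \<in> borel_measurable borel"
  unfolding Phi_def by (intro borel_measurable_continuous_onI continuous_intros)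

lemma Aset_borel[measurable]: "Aset \<xi> \<alpha> M \<in> sets borel"
  unfolding Aset_def by measurable

lemma jb2_meas[measurable]: "jb2 \<in> borel_measurable borel"
  unfolding jb2_def by (intro borel_measurable_continuous_onI continuous_intros)
lemma jb_meas[measurable]: "jb \<in> borel_measurable borel"
  unfolding jb_def by (intro borel_measurable_continuous_onI continuous_intros)

lemma wB_meas[measurable]: "wB q \<in> borel_measurable borel"
  unfolding wB_def by measurable

lemma Phi_exp: "Phi \<xi> (x1,y1) (x2,y2) (\<xi> - (x1,y1) - (x2,y2))
   = (fst \<xi> - x1) * (fst \<xi> - x2) * (x1 + x2) + (snd \<xi> - y1) * (snd \<xi> - y2) * (y1 + y2)"
  by (cases \<xi>) (simp add: Phi_def algebra_simps)

lemma Aset_swap: "(b, a) \<in> Aset \<xi> \<alpha> M \<longleftrightarrow> (a, b) \<in> Aset \<xi> \<alpha> M"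
proof -
  have "Phi \<xi> b a (\<xi> - b - a) = Phi \<xi> a b (\<xi> - a - b)"
    by (simp add: Phi_def algebra_simps)
  then show ?thesis by (simp add: Aset_def)
qed

lemma powr_neg_mono: "0 < (a::real) \<Longrightarrow> a \<le> b \<Longrightarrow> q \<ge> 0 \<Longrightarrow> b powr (-q) \<le> a powr (-q)"
  by (rule powr_mono2') auto

lemma wB_le_snd: "q \<ge> 0 \<Longrightarrow> wB q v \<le> jb (snd v) powr (-q)"
  unfolding wB_def by (rule powr_neg_mono) (auto simp: jb_pos jb2_ge_snd)

lemma wB_le_fst: "q \<ge> 0 \<Longrightarrow> wB q v \<le> jb (fst v) powr (-q)"
  unfolding wB_def by (rule powr_neg_mono) (auto simp: jb_pos jb2_ge_fst)

lemma wB_split_R: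
  assumes "R > 0" "norm v \<ge> R" "a \<ge> 0" "b \<ge> 0"
  shows "wB (a + b) v \<le> R powr (-a) * wB b v"
proof -
  have "wB (a + b) v = jb2 v powr (-a) * jb2 v powr (-b)"
    by (simp add: wB_def powr_add[symmetric])
  also have "\<dots> \<le> R powr (-a) * jb2 v powr (-b)"
    by (intro mult_right_mono powr_neg_mono) (use assms jb2_ge_norm[of v] in auto)
  finally show ?thesis by (simp add: wB_def)
qed

lemma slice_x_bound:
  fixes F :: "(real \<times> real) \<times> (real \<times> real) \<Rightarrow> ennreal" and a :: "real \<Rightarrow> ennreal"
    and b :: "real \<times> real \<Rightarrow> ennreal"
  assumes Fm[measurable]: "F \<in> borel_measurable borel" and [measurable]: "a \<in> borel_measurable borel" "b \<in> borel_measurable borel"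
    and bnd: "\<And>x2 y2 y1. (\<integral>\<^sup>+ x1. F ((x1, y1), (x2, y2)) \<partial>lborel) \<le> c * a y1 * b (x2, y2)"
  shows "(\<integral>\<^sup>+ p. F p \<partial>lborel) \<le> c * (\<integral>\<^sup>+ y. a y \<partial>lborel) * (\<integral>\<^sup>+ v. b v \<partial>lborel)"
proof -
  have "(\<integral>\<^sup>+ p. F p \<partial>lborel) = (\<integral>\<^sup>+ \<xi>2. \<integral>\<^sup>+ \<xi>1. F (\<xi>1, \<xi>2) \<partial>lborel \<partial>lborel)"
    by (rule nn_integral_pair_snd) measurable
  also have "\<dots> \<le> (\<integral>\<^sup>+ \<xi>2. c * (\<integral>\<^sup>+ y. a y \<partial>lborel) * b \<xi>2 \<partial>lborel)"
  proof (rule nn_integral_mono)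
    fix \<xi>2 :: "real \<times> real"
    have m: "(\<lambda>\<xi>1. F (\<xi>1, \<xi>2)) \<in> borel_measurable borel"
      using measurable_compose[OF pair_left_borel Fm] by (simp add: o_def)
    have "(\<integral>\<^sup>+ \<xi>1. F (\<xi>1, \<xi>2) \<partial>lborel) = (\<integral>\<^sup>+ y1. \<integral>\<^sup>+ x1. F ((x1, y1), \<xi>2) \<partial>lborel \<partial>lborel)"
      by (rule nn_integral_pair_snd[OF m])
    also have "\<dots> \<le> (\<integral>\<^sup>+ y1. c * a y1 * b \<xi>2 \<partial>lborel)"
    proof (rule nn_integral_mono)
      fix y1
      show "(\<integral>\<^sup>+ x1. F ((x1, y1), \<xi>2) \<partial>lborel) \<le> c * a y1 * b \<xi>2"
        using bnd[of y1 "fst \<xi>2" "snd \<xi>2"] by simp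
    qed
    also have "\<dots> = c * (\<integral>\<^sup>+ y. a y \<partial>lborel) * b \<xi>2"
      by (simp add: nn_integral_cmult nn_integral_multc mult.assoc)
    finally show "(\<integral>\<^sup>+ \<xi>1. F (\<xi>1, \<xi>2) \<partial>lborel) \<le> c * (\<integral>\<^sup>+ y. a y \<partial>lborel) * b \<xi>2" .
  qed
  also have "\<dots> = c * (\<integral>\<^sup>+ y. a y \<partial>lborel) * (\<integral>\<^sup>+ v. b v \<partial>lborel)"
    by (simp add: nn_integral_cmult)
  finally show ?thesis .
qed



lemma abs_le_norm_pair1: "\<bar>a\<bar> \<le> norm (a::real, b::real)"
  by (simp add: norm_Pair)
lemma abs_le_norm_pair2: "\<bar>b\<bar> \<le> norm (a::real, b::real)"
  by (simp add: norm_Pair)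

lemma xdom_abs:
  fixes N x :: real
  assumes "N > 0" "x\<^sup>2 \<ge> N\<^sup>2/2"
  shows "\<bar>x\<bar> \<ge> N * 0.7"
proof -
  have "(N*0.7)\<^sup>2 = (49/100) * N\<^sup>2" by (simp add: power2_eq_square)
  then have "(N*0.7)\<^sup>2 \<le> x\<^sup>2" using assms zero_le_power2[of N] by linarith
  then have "\<bar>N*0.7\<bar> \<le> \<bar>x\<bar>" by (simp only: abs_le_square_iff)
  then show ?thesis using assms by simp
qed

definition FR :: "real \<Rightarrow> real \<times> real \<Rightarrow> real \<Rightarrow> real \<Rightarrow> ((real \<times> real) \<times> (real \<times> real)) set
   \<Rightarrow> (real \<times> real) \<times> (real \<times> real) \<Rightarrow> ennreal" where
  "FR s \<xi> \<alpha> M Rg p = ennreal (indicator Rg p * indicator (Aset \<xi> \<alpha> M) p * wB (2 * s) (fst p) * wB (2 * s) (snd p))"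

lemma FR_meas[measurable]:
  assumes [measurable]: "R \<in> sets borel"
  shows "FR s \<xi> \<alpha> M R \<in> borel_measurable borel"
  unfolding FR_def by measurable

lemma region_a:
  fixes s M N :: real and \<xi> :: "real \<times> real"
  assumes s: "s \<ge> 0" and N: "N = norm \<xi>" "N > 0" and xd: "(fst \<xi>)\<^sup>2 \<ge> N\<^sup>2/2" and M: "M \<ge> 0"
  shows "(\<integral>\<^sup>+ p. FR s \<xi> \<alpha> M {p. norm (fst p) \<le> N/8 \<and> norm (snd p) \<le> N/8} p \<partial>lborel)
     \<le> ennreal (28 * M / N\<^sup>2) * (\<integral>\<^sup>+ y. ennreal (jb y powr (-(2 * s))) \<partial>lborel) * (\<integral>\<^sup>+ v. ennreal (wB (2 * s) v) \<partial>lborel)"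
proof (rule slice_x_bound)
  show "FR s \<xi> \<alpha> M {p. norm (fst p) \<le> N/8 \<and> norm (snd p) \<le> N/8} \<in> borel_measurable borel"
    by (intro FR_meas) measurable
  show "(\<lambda>y. ennreal (jb y powr (-(2 * s)))) \<in> borel_measurable borel" by measurable
  show "(\<lambda>v. ennreal (wB (2 * s) v)) \<in> borel_measurable borel" by measurable
  fix x2 y2 y1 :: real
  define x where "x = fst \<xi>"
  define y where "y = snd \<xi>"
  define cc where "cc = (y - y1) * (y - y2) * (y1 + y2)"
  define g where "g = (\<lambda>t. (x - t) * (x - x2) * (t + x2) + cc)"
  define S where "S = {t. \<bar>t\<bar> \<le> N/8 \<and> \<bar>g t - \<alpha>\<bar> < M}"
  let ?R = "{p::(real\<times>real)\<times>(real\<times>real). norm (fst p) \<le> N/8 \<and> norm (snd p) \<le> N/8}"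
  show "(\<integral>\<^sup>+ x1. FR s \<xi> \<alpha> M ?R ((x1, y1), (x2, y2)) \<partial>lborel)
        \<le> ennreal (28 * M / N\<^sup>2) * ennreal (jb y1 powr (-(2 * s))) * ennreal (wB (2 * s) (x2, y2))"
  proof (cases "norm (x2, y2) \<le> N/8")
    case False
    then have "FR s \<xi> \<alpha> M ?R ((x1, y1), (x2, y2)) = 0" for x1 by (simp add: FR_def)
    then show ?thesis by simp
  next
    case True
    have x2b: "\<bar>x2\<bar> \<le> N/8" using True abs_le_norm_pair1[of x2 y2] by linarith
    have pt: "FR s \<xi> \<alpha> M ?R ((x1, y1), (x2, y2)) \<le> ennreal (indicator S x1) * ennreal (jb y1 powr (-(2 * s)) * wB (2 * s) (x2, y2))" for x1
    proof (cases "((x1, y1), (x2, y2)) \<in> ?R \<and> ((x1, y1), (x2, y2)) \<in> Aset \<xi> \<alpha> M")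
      case False
      then show ?thesis by (auto simp: FR_def)
    next
      case True
      then have "\<bar>x1\<bar> \<le> N/8" using abs_le_norm_pair1[of x1 y1] by auto
      moreover have "\<bar>g x1 - \<alpha>\<bar> < M"
        using True by (simp add: Aset_def Phi_exp[of \<xi> x1 y1 x2 y2, simplified] g_def cc_def x_def y_def
             del: Phi_def)
      ultimately have "x1 \<in> S" by (simp add: S_def)
      moreover have "wB (2 * s) (x1, y1) * wB (2 * s) (x2, y2) \<le> jb y1 powr (-(2 * s)) * wB (2 * s) (x2, y2)"
        by (intro mult_right_mono) (use wB_le_snd[of "2 * s" "(x1,y1)"] s in auto)
      ultimately show ?thesis using True by (simp add: FR_def ennreal_mult[symmetric] ennreal_leI)
    qed
    have "(\<integral>\<^sup>+ x1. FR s \<xi> \<alpha> M ?R ((x1, y1), (x2, y2)) \<partial>lborel)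
          \<le> (\<integral>\<^sup>+ x1. ennreal (indicator S x1) * ennreal (jb y1 powr (-(2 * s)) * wB (2 * s) (x2, y2)) \<partial>lborel)"
      by (rule nn_integral_mono) (rule pt)
    also have "\<dots> = (\<integral>\<^sup>+ x1. indicator S x1 \<partial>lborel) * ennreal (jb y1 powr (-(2 * s)) * wB (2 * s) (x2, y2))"
    proof -
      have Sm: "S \<in> sets borel" unfolding S_def g_def by measurable
      show ?thesis
        by (subst nn_integral_multc[symmetric]) (use Sm in \<open>auto simp: ennreal_indicator\<close>)
    qed
    also have "\<dots> \<le> ennreal (28 * M / N\<^sup>2) * ennreal (jb y1 powr (-(2 * s)) * wB (2 * s) (x2, y2))"
    proof (rule mult_right_mono)
      have xx: "x\<^sup>2 \<ge> N\<^sup>2/2" using xd by (simp add: x_def)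
      show "(\<integral>\<^sup>+ x1. indicator S x1 \<partial>lborel) \<le> ennreal (28 * M / N\<^sup>2)"
        unfolding S_def g_def by (rule slice_linear[OF N(2) x2b xx M])
    qed simp
    also have "\<dots> = ennreal (28 * M / N\<^sup>2) * ennreal (jb y1 powr (-(2 * s))) * ennreal (wB (2 * s) (x2, y2))"
      by (simp add: ennreal_mult mult.assoc)
    finally show ?thesis .
  qed
qed



lemma region_c:
  fixes s M N :: real and \<xi> :: "real \<times> real"
  assumes s: "s > 3/2" and N: "N = norm \<xi>" "N > 0" and xd: "(fst \<xi>)\<^sup>2 \<ge> N\<^sup>2/2" and M: "M \<ge> 0"
  shows "(\<integral>\<^sup>+ p. FR s \<xi> \<alpha> M {p. norm (fst p) > N/8 \<and> norm (snd p) \<le> N/8} p \<partial>lborel)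
     \<le> ennreal (4 * sqrt (4 * M / N) * (N/8) powr (-(s + 1/4))) * (\<integral>\<^sup>+ y. ennreal (jb y powr (-(s - 1/4))) \<partial>lborel)
        * (\<integral>\<^sup>+ v. ennreal (wB (2 * s) v) \<partial>lborel)"
proof (rule slice_x_bound)
  show "FR s \<xi> \<alpha> M {p. norm (fst p) > N/8 \<and> norm (snd p) \<le> N/8} \<in> borel_measurable borel"
    by (intro FR_meas) measurable
  show "(\<lambda>y. ennreal (jb y powr (-(s - 1/4)))) \<in> borel_measurable borel" by measurable
  show "(\<lambda>v. ennreal (wB (2 * s) v)) \<in> borel_measurable borel" by measurable
  fix x2 y2 y1 :: real
  define x where "x = fst \<xi>"
  define y where "y = snd \<xi>"
  define cc where "cc = (y - y1) * (y - y2) * (y1 + y2)"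
  define g where "g = (\<lambda>t. (x - t) * (x - x2) * (t + x2) + cc)"
  define S where "S = {t. \<bar>g t - \<alpha>\<bar> < M}"
  define K where "K = (N/8) powr (-(s + 1/4))"
  let ?R = "{p::(real\<times>real)\<times>(real\<times>real). norm (fst p) > N/8 \<and> norm (snd p) \<le> N/8}"
  show "(\<integral>\<^sup>+ x1. FR s \<xi> \<alpha> M ?R ((x1, y1), (x2, y2)) \<partial>lborel)
        \<le> ennreal (4 * sqrt (4 * M / N) * K) * ennreal (jb y1 powr (-(s - 1/4))) * ennreal (wB (2 * s) (x2, y2))"
  proof (cases "norm (x2, y2) \<le> N/8")
    case False
    then have "FR s \<xi> \<alpha> M ?R ((x1, y1), (x2, y2)) = 0" for x1 by (simp add: FR_def)
    then show ?thesis by simp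
  next
    case True
    have x2b: "\<bar>x2\<bar> \<le> N/8" using True abs_le_norm_pair1[of x2 y2] by linarith
    have xa: "\<bar>x\<bar> \<ge> N * 0.7" using xdom_abs[OF N(2)] xd by (simp add: x_def)
    have ax: "\<bar>x - x2\<bar> \<ge> N/2" using xa x2b by linarith
    have K0: "K \<ge> 0" by (simp add: K_def)
    have pt: "FR s \<xi> \<alpha> M ?R ((x1, y1), (x2, y2)) \<le> ennreal (indicator S x1) * ennreal (K * jb y1 powr (-(s - 1/4)) * wB (2 * s) (x2, y2))" for x1
    proof (cases "((x1, y1), (x2, y2)) \<in> ?R \<and> ((x1, y1), (x2, y2)) \<in> Aset \<xi> \<alpha> M")
      case False
      then show ?thesis by (auto simp: FR_def)
    next
      case True
      then have n1: "norm (x1, y1) \<ge> N/8" by auto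
      have "\<bar>g x1 - \<alpha>\<bar> < M"
        using True by (simp add: Aset_def Phi_exp[of \<xi> x1 y1 x2 y2, simplified] g_def cc_def x_def y_def
             del: Phi_def)
      then have "x1 \<in> S" by (simp add: S_def)
      moreover have "wB (2 * s) (x1, y1) \<le> K * jb y1 powr (-(s - 1/4))"
      proof -
        have "wB (2 * s) (x1, y1) = wB ((s + 1/4) + (s - 1/4)) (x1, y1)" by simp
        also have "\<dots> \<le> (N/8) powr (-(s + 1/4)) * wB (s - 1/4) (x1, y1)"
          by (rule wB_split_R) (use n1 N s in auto)
        also have "\<dots> \<le> K * jb y1 powr (-(s - 1/4))"
          unfolding K_def by (intro mult_left_mono) (use wB_le_snd[of "s - 1/4" "(x1,y1)"] s in auto)
        finally show ?thesis .
      qed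
      then have "wB (2 * s) (x1, y1) * wB (2 * s) (x2, y2) \<le> K * jb y1 powr (-(s - 1/4)) * wB (2 * s) (x2, y2)"
        by (intro mult_right_mono) auto
      ultimately show ?thesis using True by (simp add: FR_def ennreal_mult[symmetric] ennreal_leI)
    qed
    have "(\<integral>\<^sup>+ x1. FR s \<xi> \<alpha> M ?R ((x1, y1), (x2, y2)) \<partial>lborel)
          \<le> (\<integral>\<^sup>+ x1. ennreal (indicator S x1) * ennreal (K * jb y1 powr (-(s - 1/4)) * wB (2 * s) (x2, y2)) \<partial>lborel)"
      by (rule nn_integral_mono) (rule pt)
    also have "\<dots> = (\<integral>\<^sup>+ x1. indicator S x1 \<partial>lborel) * ennreal (K * jb y1 powr (-(s - 1/4)) * wB (2 * s) (x2, y2))"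
    proof -
      have Sm: "S \<in> sets borel" unfolding S_def g_def by measurable
      show ?thesis
        by (subst nn_integral_multc[symmetric]) (use Sm in \<open>auto simp: ennreal_indicator\<close>)
    qed
    also have "\<dots> \<le> ennreal (4 * sqrt (4 * M / N)) * ennreal (K * jb y1 powr (-(s - 1/4)) * wB (2 * s) (x2, y2))"
    proof (rule mult_right_mono)
      have "x - x2 \<noteq> 0" using ax N by auto
      then have "(\<integral>\<^sup>+ x1. indicator S x1 \<partial>lborel) \<le> ennreal (4 * sqrt (2 * M / \<bar>x - x2\<bar>))"
        unfolding S_def g_def by (rule slice_parab[OF _ M])
      also have "\<dots> \<le> ennreal (4 * sqrt (4 * M / N))"
      proof (intro ennreal_leI mult_left_mono real_sqrt_le_mono)
        have "2 * M / \<bar>x - x2\<bar> \<le> 2 * M / (N/2)"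
        proof (rule divide_left_mono)
          show "\<bar>x - x2\<bar> * (N/2) > 0" using ax N by (intro mult_pos_pos) auto
        qed (use ax M in auto)
        then show "2 * M / \<bar>x - x2\<bar> \<le> 4 * M / N" by simp
      qed simp
      finally show "(\<integral>\<^sup>+ x1. indicator S x1 \<partial>lborel) \<le> ennreal (4 * sqrt (4 * M / N))" .
    qed simp
    also have "\<dots> = ennreal (4 * sqrt (4 * M / N) * K) * ennreal (jb y1 powr (-(s - 1/4))) * ennreal (wB (2 * s) (x2, y2))"
    proof -
      have sq0: "0 \<le> 4 * sqrt (4 * M / N)" using M N(2) by simp
      show ?thesis
        using K0 sq0 by (simp add: ennreal_mult[symmetric] mult_nonneg_nonneg ac_simps)
    qed
    finally show ?thesis .
  qed
qed



lemma powr_le1: "(N::real) \<ge> 1 \<Longrightarrow> e \<le> 0 \<Longrightarrow> N powr e \<le> 1"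
  using powr_mono[of e 0 N] by simp

lemma div8_powr: "(N::real) \<ge> 0 \<Longrightarrow> (N/8) powr (-e) = N powr (-e) * 8 powr e"
  by (simp add: powr_divide powr_minus field_simps)

lemma N_mult_powr: "(N::real) > 0 \<Longrightarrow> N * N powr a = N powr (1 + a)"
  by (simp add: powr_add)

lemma powr_bound_b:
  fixes N s :: real assumes "N \<ge> 1" "s \<ge> 3/2"
  shows "N\<^sup>2 * ((N/8) powr (-(s - 1/2)))\<^sup>2 \<le> 8 powr (2 * s - 1)"
proof -
  have N0: "N > 0" using assms by simp
  have "N * (N/8) powr (-(s - 1/2)) = (N * N powr (-(s - 1/2))) * 8 powr (s - 1/2)"
    using N0 div8_powr[of N "s - 1/2"] by (simp add: mult.assoc)
  also have "N * N powr (-(s - 1/2)) = N powr (1 + -(s - 1/2))" using N0 by (rule N_mult_powr)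
  finally have e: "N * (N/8) powr (-(s - 1/2)) = N powr (3/2 - s) * 8 powr (s - 1/2)" by simp
  have le: "N powr (3/2 - s) \<le> 1" using assms by (intro powr_le1) auto
  have "N\<^sup>2 * ((N/8) powr (-(s - 1/2)))\<^sup>2 = (N * (N/8) powr (-(s - 1/2)))\<^sup>2"
    by (simp add: power_mult_distrib)
  also have "\<dots> = (N powr (3/2 - s) * 8 powr (s - 1/2))\<^sup>2" by (simp only: e)
  also have "\<dots> \<le> (1 * 8 powr (s - 1/2))\<^sup>2"
    by (intro power_mono mult_right_mono le) auto
  also have "\<dots> = 8 powr (2 * s - 1)"
    by (simp add: power2_eq_square powr_add[symmetric])
  finally show ?thesis .
qed

lemma powr_bound_c:
  fixes N s M :: real assumes "N \<ge> 1" "s \<ge> 3/2" "M \<ge> 0"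
  shows "N\<^sup>2 * (sqrt (4 * M / N) * (N/8) powr (-(s + 1/4))) \<le> 2 * 8 powr (s + 1/4) * sqrt M"
proof -
  have N0: "N > 0" using assms by simp
  have e1: "sqrt (4 * M / N) = 2 * sqrt M / N powr (1/2)"
    using N0 by (simp add: real_sqrt_divide real_sqrt_mult powr_half_sqrt)
  have e2: "(N/8) powr (-(s + 1/4)) = N powr (-(s + 1/4)) * 8 powr (s + 1/4)"
    using N0 div8_powr[of N "s + 1/4"] by simp
  have e3: "N\<^sup>2 / N powr (1/2) * N powr (-(s + 1/4)) = N powr (5/4 - s)"
  proof -
    have a: "N\<^sup>2 = N powr 2" using N0 by (simp add: powr_numeral)
    have "N\<^sup>2 / N powr (1/2) * N powr (-(s + 1/4)) = N powr (2 - 1/2) * N powr (-(s + 1/4))"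
      by (simp only: a powr_diff)
    also have "\<dots> = N powr (2 - 1/2 + -(s + 1/4))" by (simp only: powr_add)
    also have "2 - 1/2 + -(s + 1/4) = 5/4 - s" by simp
    finally show ?thesis .
  qed
  have le: "N powr (5/4 - s) \<le> 1" using assms by (intro powr_le1) auto
  have "N\<^sup>2 * (sqrt (4 * M / N) * (N/8) powr (-(s + 1/4)))
      = (N\<^sup>2 / N powr (1/2) * N powr (-(s + 1/4))) * (2 * 8 powr (s + 1/4) * sqrt M)"
    unfolding e1 e2 by (simp add: ac_simps)
  also have "\<dots> = N powr (5/4 - s) * (2 * 8 powr (s + 1/4) * sqrt M)" by (simp only: e3)
  also have "\<dots> \<le> 1 * (2 * 8 powr (s + 1/4) * sqrt M)"
    by (intro mult_right_mono le) (use assms in simp)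
  finally show ?thesis by simp
qed

lemma FR_swap_eq:
  "FR s \<xi> \<alpha> M {p. norm (fst p) \<le> N/8 \<and> norm (snd p) > N/8} (snd p, fst p)
   = FR s \<xi> \<alpha> M {p. norm (fst p) > N/8 \<and> norm (snd p) \<le> N/8} p"
proof -
  have i1: "indicator {p. norm (fst p) \<le> N/8 \<and> norm (snd p) > N/8} (snd p, fst p)
      = (indicator {p. norm (fst p) > N/8 \<and> norm (snd p) \<le> N/8} p :: real)"
    by (auto simp: indicator_def)
  have i2: "indicator (Aset \<xi> \<alpha> M) (snd p, fst p) = (indicator (Aset \<xi> \<alpha> M) p :: real)"
    using Aset_swap[of "snd p" "fst p" \<xi> \<alpha> M] by (simp add: indicator_def)
  show ?thesis unfolding FR_def i1 i2 by (simp add: ac_simps)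
qed

lemma region_c2:
  "(\<integral>\<^sup>+ p. FR s \<xi> \<alpha> M {p. norm (fst p) \<le> N/8 \<and> norm (snd p) > N/8} p \<partial>lborel)
   = (\<integral>\<^sup>+ p. FR s \<xi> \<alpha> M {p. norm (fst p) > N/8 \<and> norm (snd p) \<le> N/8} p \<partial>lborel)"
proof -
  have m: "FR s \<xi> \<alpha> M {p. norm (fst p) \<le> N/8 \<and> norm (snd p) > N/8} \<in> borel_measurable borel"
    by (intro FR_meas) measurable
  have "(\<integral>\<^sup>+ p. FR s \<xi> \<alpha> M {p. norm (fst p) \<le> N/8 \<and> norm (snd p) > N/8} p \<partial>lborel)
     = (\<integral>\<^sup>+ p. FR s \<xi> \<alpha> M {p. norm (fst p) \<le> N/8 \<and> norm (snd p) > N/8} (snd p, fst p) \<partial>lborel)"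
    by (rule nn_integral_swap_pair[OF m, symmetric])
  also have "\<dots> = (\<integral>\<^sup>+ p. FR s \<xi> \<alpha> M {p. norm (fst p) > N/8 \<and> norm (snd p) \<le> N/8} p \<partial>lborel)"
    by (simp only: FR_swap_eq)
  finally show ?thesis .
qed

lemma region_b:
  fixes s N :: real
  assumes s: "s > 3/2" and N: "N > 0"
  shows "(\<integral>\<^sup>+ p. FR s \<xi> \<alpha> M {p. norm (fst p) > N/8 \<and> norm (snd p) > N/8} p \<partial>lborel)
     \<le> ennreal (((N/8) powr (-(s - 1/2)))\<^sup>2) * ((\<integral>\<^sup>+ v. ennreal (wB (s + 1/2) v) \<partial>lborel) * (\<integral>\<^sup>+ v. ennreal (wB (s + 1/2) v) \<partial>lborel))"
proof -
  define K where "K = (N/8) powr (-(s - 1/2))"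
  have K0: "K \<ge> 0" by (simp add: K_def)
  have w: "wB (2 * s) v \<le> K * wB (s + 1/2) v" if "norm v > N/8" for v
  proof -
    have "wB (2 * s) v = wB ((s - 1/2) + (s + 1/2)) v" by simp
    also have "\<dots> \<le> K * wB (s + 1/2) v"
      unfolding K_def by (rule wB_split_R) (use that N s in auto)
    finally show ?thesis .
  qed
  have "(\<integral>\<^sup>+ p. FR s \<xi> \<alpha> M {p. norm (fst p) > N/8 \<and> norm (snd p) > N/8} p \<partial>lborel)
      \<le> (\<integral>\<^sup>+ p. ennreal (K * wB (s + 1/2) (fst p)) * ennreal (K * wB (s + 1/2) (snd p)) \<partial>lborel)"
  proof (rule nn_integral_mono)
    fix p :: "(real \<times> real) \<times> (real \<times> real)"
    show "FR s \<xi> \<alpha> M {p. norm (fst p) > N/8 \<and> norm (snd p) > N/8} p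
          \<le> ennreal (K * wB (s + 1/2) (fst p)) * ennreal (K * wB (s + 1/2) (snd p))"
    proof (cases "norm (fst p) > N/8 \<and> norm (snd p) > N/8")
      case True
      have "indicator {p. norm (fst p) > N/8 \<and> norm (snd p) > N/8} p * indicator (Aset \<xi> \<alpha> M) p
            * wB (2 * s) (fst p) * wB (2 * s) (snd p) \<le> 1 * wB (2 * s) (fst p) * wB (2 * s) (snd p)"
        by (intro mult_right_mono) (auto simp: indicator_def)
      also have "\<dots> \<le> (K * wB (s + 1/2) (fst p)) * (K * wB (s + 1/2) (snd p))"
        by (rule mult_mono) (use True w[of "fst p"] w[of "snd p"] K0 in auto)
      finally show ?thesis using K0
        by (simp add: FR_def ennreal_mult[symmetric] ennreal_leI)
    next
      case False
      then show ?thesis by (simp add: FR_def)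
    qed
  qed
  also have "\<dots> = (\<integral>\<^sup>+ v. ennreal (K * wB (s + 1/2) v) \<partial>lborel) * (\<integral>\<^sup>+ v. ennreal (K * wB (s + 1/2) v) \<partial>lborel)"
    by (rule nn_integral_prod_split) measurable
  also have "\<dots> = ennreal (K\<^sup>2) * ((\<integral>\<^sup>+ v. ennreal (wB (s + 1/2) v) \<partial>lborel) * (\<integral>\<^sup>+ v. ennreal (wB (s + 1/2) v) \<partial>lborel))"
    using K0 by (simp add: ennreal_mult nn_integral_cmult power2_eq_square ac_simps)
  finally show ?thesis unfolding K_def .
qed

definition Kint :: "real \<Rightarrow> real \<times> real \<Rightarrow> real \<Rightarrow> real \<Rightarrow> ennreal" where
  "Kint s \<xi> \<alpha> M = (\<integral>\<^sup>+ p. FR s \<xi> \<alpha> M UNIV p \<partial>lborel)"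

lemma Kint_split:
  "Kint s \<xi> \<alpha> M =
     (\<integral>\<^sup>+ p. FR s \<xi> \<alpha> M {p. norm (fst p) \<le> N/8 \<and> norm (snd p) \<le> N/8} p \<partial>lborel)
   + (\<integral>\<^sup>+ p. FR s \<xi> \<alpha> M {p. norm (fst p) > N/8 \<and> norm (snd p) > N/8} p \<partial>lborel)
   + (\<integral>\<^sup>+ p. FR s \<xi> \<alpha> M {p. norm (fst p) > N/8 \<and> norm (snd p) \<le> N/8} p \<partial>lborel)
   + (\<integral>\<^sup>+ p. FR s \<xi> \<alpha> M {p. norm (fst p) \<le> N/8 \<and> norm (snd p) > N/8} p \<partial>lborel)"
proof -
  let ?F = "FR s \<xi> \<alpha> M"
  let ?Ra = "{p::(real\<times>real)\<times>(real\<times>real). norm (fst p) \<le> N/8 \<and> norm (snd p) \<le> N/8}"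
  let ?Rb = "{p::(real\<times>real)\<times>(real\<times>real). norm (fst p) > N/8 \<and> norm (snd p) > N/8}"
  let ?Rc = "{p::(real\<times>real)\<times>(real\<times>real). norm (fst p) > N/8 \<and> norm (snd p) \<le> N/8}"
  let ?Rd = "{p::(real\<times>real)\<times>(real\<times>real). norm (fst p) \<le> N/8 \<and> norm (snd p) > N/8}"
  have ma: "?F ?Ra \<in> borel_measurable borel" by (intro FR_meas) measurable
  have mb: "?F ?Rb \<in> borel_measurable borel" by (intro FR_meas) measurable
  have mc: "?F ?Rc \<in> borel_measurable borel" by (intro FR_meas) measurable
  have md: "?F ?Rd \<in> borel_measurable borel" by (intro FR_meas) measurable
  have pt: "?F UNIV p = ?F ?Ra p + ?F ?Rb p + ?F ?Rc p + ?F ?Rd p" for p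
    by (cases "norm (fst p) \<le> N/8"; cases "norm (snd p) \<le> N/8") (auto simp: FR_def)
  have "Kint s \<xi> \<alpha> M = (\<integral>\<^sup>+ p. ?F ?Ra p + ?F ?Rb p + ?F ?Rc p + ?F ?Rd p \<partial>lborel)"
    unfolding Kint_def by (intro nn_integral_cong) (rule pt)
  also have "\<dots> = (\<integral>\<^sup>+ p. ?F ?Ra p + ?F ?Rb p + ?F ?Rc p \<partial>lborel) + (\<integral>\<^sup>+ p. ?F ?Rd p \<partial>lborel)"
    by (rule nn_integral_add) (use ma mb mc md in auto)
  also have "(\<integral>\<^sup>+ p. ?F ?Ra p + ?F ?Rb p + ?F ?Rc p \<partial>lborel) = (\<integral>\<^sup>+ p. ?F ?Ra p + ?F ?Rb p \<partial>lborel) + (\<integral>\<^sup>+ p. ?F ?Rc p \<partial>lborel)"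
    by (rule nn_integral_add) (use ma mb mc in auto)
  also have "(\<integral>\<^sup>+ p. ?F ?Ra p + ?F ?Rb p \<partial>lborel) = (\<integral>\<^sup>+ p. ?F ?Ra p \<partial>lborel) + (\<integral>\<^sup>+ p. ?F ?Rb p \<partial>lborel)"
    by (rule nn_integral_add) (use ma mb in auto)
  finally show ?thesis .
qed



definition "cI1 s = enn2real (\<integral>\<^sup>+ y. ennreal (jb y powr (-(2 * s))) \<partial>lborel)"
definition "cI2 s = enn2real (\<integral>\<^sup>+ v. ennreal (wB (2 * s) v) \<partial>lborel)"
definition "cI3 s = enn2real (\<integral>\<^sup>+ v. ennreal (wB (s + 1/2) v) \<partial>lborel)"
definition "cI4 s = enn2real (\<integral>\<^sup>+ y. ennreal (jb y powr (-(s - 1/4))) \<partial>lborel)"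

lemma cI_eqs:
  assumes "s > 3/2"
  shows "(\<integral>\<^sup>+ y. ennreal (jb y powr (-(2 * s))) \<partial>lborel) = ennreal (cI1 s)"
    and "(\<integral>\<^sup>+ v. ennreal (wB (2 * s) v) \<partial>lborel) = ennreal (cI2 s)"
    and "(\<integral>\<^sup>+ v. ennreal (wB (s + 1/2) v) \<partial>lborel) = ennreal (cI3 s)"
    and "(\<integral>\<^sup>+ y. ennreal (jb y powr (-(s - 1/4))) \<partial>lborel) = ennreal (cI4 s)"
proof -
  show "(\<integral>\<^sup>+ y. ennreal (jb y powr (-(2 * s))) \<partial>lborel) = ennreal (cI1 s)"
    unfolding cI1_def using jb_powr_int_finite[of "2 * s"] assms by (simp add: ennreal_enn2real less_top)
  show "(\<integral>\<^sup>+ v. ennreal (wB (2 * s) v) \<partial>lborel) = ennreal (cI2 s)"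
    unfolding cI2_def wB_def using jb2_powr_int_finite[of "2 * s"] assms by (simp add: ennreal_enn2real less_top)
  show "(\<integral>\<^sup>+ v. ennreal (wB (s + 1/2) v) \<partial>lborel) = ennreal (cI3 s)"
    unfolding cI3_def wB_def using jb2_powr_int_finite[of "s + 1/2"] assms by (simp add: ennreal_enn2real less_top)
  show "(\<integral>\<^sup>+ y. ennreal (jb y powr (-(s - 1/4))) \<partial>lborel) = ennreal (cI4 s)"
    unfolding cI4_def using jb_powr_int_finite[of "s - 1/4"] assms by (simp add: ennreal_enn2real less_top)
qed

lemma cI_nonneg: "cI1 s \<ge> 0" "cI2 s \<ge> 0" "cI3 s \<ge> 0" "cI4 s \<ge> 0"
  by (simp_all add: cI1_def cI2_def cI3_def cI4_def)

definition "Cx s = 56 * cI1 s * cI2 s + 2 * 8 powr (2 * s - 1) * (cI3 s)\<^sup>2 + 32 * 8 powr (s + 1/4) * cI4 s * cI2 s"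

lemma Kint_xdom:
  fixes s M N :: real and \<xi> :: "real \<times> real"
  assumes s: "s > 3/2" and N: "N = norm \<xi>" "N \<ge> 1" and xd: "(fst \<xi>)\<^sup>2 \<ge> N\<^sup>2/2" and M: "M \<ge> 1"
  shows "ennreal ((jb2 \<xi>)\<^sup>2) * Kint s \<xi> \<alpha> M \<le> ennreal (Cx s * M)"
proof -
  have N0: "N > 0" using N by linarith
  have M0: "M \<ge> 0" using M by simp
  define c1 where "c1 = cI1 s"
  define c2 where "c2 = cI2 s"
  define c3 where "c3 = cI3 s"
  define c4 where "c4 = cI4 s"
  have c0: "c1 \<ge> 0" "c2 \<ge> 0" "c3 \<ge> 0" "c4 \<ge> 0" using cI_nonneg by (simp_all add: c1_def c2_def c3_def c4_def)
  define Kb where "Kb = (N/8) powr (-(s - 1/2))"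
  define Kc where "Kc = (N/8) powr (-(s + 1/4))"
  have Kc0: "Kc \<ge> 0" by (simp add: Kc_def)
  define A where "A = 28 * M / N\<^sup>2 * c1 * c2"
  define B where "B = Kb\<^sup>2 * (c3 * c3)"
  define C where "C = 4 * sqrt (4 * M / N) * Kc * c4 * c2"
  have A0: "A \<ge> 0" unfolding A_def using c0 M0 by simp
  have B0: "B \<ge> 0" unfolding B_def using c0 by simp
  have C0: "C \<ge> 0" unfolding C_def using c0 M0 N0 Kc0 by simp
  have ra: "(\<integral>\<^sup>+ p. FR s \<xi> \<alpha> M {p. norm (fst p) \<le> N/8 \<and> norm (snd p) \<le> N/8} p \<partial>lborel) \<le> ennreal A"
  proof -
    have "(\<integral>\<^sup>+ p. FR s \<xi> \<alpha> M {p. norm (fst p) \<le> N/8 \<and> norm (snd p) \<le> N/8} p \<partial>lborel)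
       \<le> ennreal (28 * M / N\<^sup>2) * ennreal c1 * ennreal c2"
      using region_a[OF _ N(1) N0 xd M0, of s \<alpha>] s cI_eqs[OF s] by (simp add: c1_def c2_def)
    also have "\<dots> = ennreal A" unfolding A_def using c0 M0 by (simp add: ennreal_mult[symmetric])
    finally show ?thesis .
  qed
  have rb: "(\<integral>\<^sup>+ p. FR s \<xi> \<alpha> M {p. norm (fst p) > N/8 \<and> norm (snd p) > N/8} p \<partial>lborel) \<le> ennreal B"
  proof -
    have "(\<integral>\<^sup>+ p. FR s \<xi> \<alpha> M {p. norm (fst p) > N/8 \<and> norm (snd p) > N/8} p \<partial>lborel)
       \<le> ennreal (Kb\<^sup>2) * (ennreal c3 * ennreal c3)"
      using region_b[OF s N0, of \<xi> \<alpha> M] cI_eqs[OF s] by (simp add: c3_def Kb_def)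
    also have "\<dots> = ennreal B" unfolding B_def using c0 by (simp add: ennreal_mult[symmetric])
    finally show ?thesis .
  qed
  have rc: "(\<integral>\<^sup>+ p. FR s \<xi> \<alpha> M {p. norm (fst p) > N/8 \<and> norm (snd p) \<le> N/8} p \<partial>lborel) \<le> ennreal C"
  proof -
    have "(\<integral>\<^sup>+ p. FR s \<xi> \<alpha> M {p. norm (fst p) > N/8 \<and> norm (snd p) \<le> N/8} p \<partial>lborel)
       \<le> ennreal (4 * sqrt (4 * M / N) * Kc) * ennreal c4 * ennreal c2"
      using region_c[OF s N(1) N0 xd M0, of \<alpha>] cI_eqs[OF s] by (simp add: c4_def c2_def Kc_def)
    also have "\<dots> = ennreal C" unfolding C_def using c0 M0 N0 Kc0 by (simp add: ennreal_mult[symmetric])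
    finally show ?thesis .
  qed
  have "Kint s \<xi> \<alpha> M \<le> ennreal A + ennreal B + ennreal C + ennreal C"
    unfolding Kint_split[where N=N] region_c2
    by (intro add_mono ra rb rc)
  also have "\<dots> = ennreal (A + B + 2 * C)"
    using A0 B0 C0 by (simp add: ennreal_plus[symmetric] del: ennreal_plus)
  finally have K: "Kint s \<xi> \<alpha> M \<le> ennreal (A + B + 2 * C)" .
  have j: "(jb2 \<xi>)\<^sup>2 \<le> 2 * N\<^sup>2" using jb2_sq_le[of \<xi>] N by simp
  have t1: "(jb2 \<xi>)\<^sup>2 * A \<le> 56 * c1 * c2 * M"
  proof -
    have "(jb2 \<xi>)\<^sup>2 * A \<le> (2 * N\<^sup>2) * A" by (intro mult_right_mono j A0)
    also have "\<dots> = 56 * c1 * c2 * M" unfolding A_def using N0 by (simp add: field_simps)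
    finally show ?thesis .
  qed
  have t2: "(jb2 \<xi>)\<^sup>2 * B \<le> 2 * 8 powr (2 * s - 1) * c3\<^sup>2 * M"
  proof -
    have "(jb2 \<xi>)\<^sup>2 * B \<le> (2 * N\<^sup>2) * B" by (intro mult_right_mono j B0)
    also have "\<dots> = 2 * (N\<^sup>2 * Kb\<^sup>2) * c3\<^sup>2" unfolding B_def by (simp add: power2_eq_square ac_simps)
    also have "\<dots> \<le> 2 * 8 powr (2 * s - 1) * c3\<^sup>2"
      using powr_bound_b[OF N(2), of s] s unfolding Kb_def by (intro mult_right_mono) auto
    also have "\<dots> \<le> 2 * 8 powr (2 * s - 1) * c3\<^sup>2 * M"
      using mult_left_mono[OF M, of "2 * 8 powr (2 * s - 1) * c3\<^sup>2"] by simp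
    finally show ?thesis .
  qed
  have t3: "(jb2 \<xi>)\<^sup>2 * (2 * C) \<le> 32 * 8 powr (s + 1/4) * c4 * c2 * M"
  proof -
    have sM: "sqrt M \<le> M"
    proof -
      have s1: "1 \<le> sqrt M" using M by simp
      have "sqrt M * 1 \<le> sqrt M * sqrt M" by (intro mult_left_mono s1) (use M in simp)
      also have "sqrt M * sqrt M = M" using M by simp
      finally show ?thesis by simp
    qed
    have "(jb2 \<xi>)\<^sup>2 * (2 * C) \<le> (2 * N\<^sup>2) * (2 * C)" using C0 by (intro mult_right_mono j) auto
    also have "\<dots> = 16 * (N\<^sup>2 * (sqrt (4 * M / N) * Kc)) * (c4 * c2)" unfolding C_def by (simp add: ac_simps)
    also have "\<dots> \<le> 16 * (2 * 8 powr (s + 1/4) * sqrt M) * (c4 * c2)"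
      using powr_bound_c[OF N(2), of s M] s M c0 unfolding Kc_def
      by (intro mult_right_mono mult_left_mono) auto
    also have "\<dots> \<le> 16 * (2 * 8 powr (s + 1/4) * M) * (c4 * c2)"
      using sM c0 by (intro mult_right_mono mult_left_mono) auto
    finally show ?thesis by (simp add: ac_simps)
  qed
  have "ennreal ((jb2 \<xi>)\<^sup>2) * Kint s \<xi> \<alpha> M \<le> ennreal ((jb2 \<xi>)\<^sup>2) * ennreal (A + B + 2 * C)"
    by (intro mult_left_mono K) simp
  also have "\<dots> = ennreal ((jb2 \<xi>)\<^sup>2 * (A + B + 2 * C))" by (rule ennreal_mult[symmetric]) (use A0 B0 C0 in auto)
  also have "\<dots> \<le> ennreal (Cx s * M)"
  proof (rule ennreal_leI)
    have "(jb2 \<xi>)\<^sup>2 * (A + B + 2 * C) = (jb2 \<xi>)\<^sup>2 * A + (jb2 \<xi>)\<^sup>2 * B + (jb2 \<xi>)\<^sup>2 * (2 * C)"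
      by (simp add: algebra_simps)
    also have "\<dots> \<le> 56 * c1 * c2 * M + 2 * 8 powr (2 * s - 1) * c3\<^sup>2 * M + 32 * 8 powr (s + 1/4) * c4 * c2 * M"
      using t1 t2 t3 by linarith
    also have "\<dots> = Cx s * M" unfolding Cx_def c1_def c2_def c3_def c4_def by (simp add: algebra_simps)
    finally show "(jb2 \<xi>)\<^sup>2 * (A + B + 2 * C) \<le> Cx s * M" .
  qed
  finally show ?thesis .
qed



definition sw :: "real \<times> real \<Rightarrow> real \<times> real" where "sw v = (snd v, fst v)"

lemma sw_borel[measurable]: "sw \<in> borel_measurable borel"
  unfolding sw_def by (intro borel_measurable_continuous_onI continuous_intros)

lemma norm_sw[simp]: "norm (sw v) = norm v"
  by (cases v) (simp add: sw_def norm_Pair add.commute)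
lemma jb2_sw[simp]: "jb2 (sw v) = jb2 v" by (simp add: jb2_def)
lemma wB_sw[simp]: "wB q (sw v) = wB q v" by (simp add: wB_def)
lemma fst_sw[simp]: "fst (sw v) = snd v" and snd_sw[simp]: "snd (sw v) = fst v" by (simp_all add: sw_def)

lemma Aset_sw: "(sw a, sw b) \<in> Aset (sw \<xi>) \<alpha> M \<longleftrightarrow> (a, b) \<in> Aset \<xi> \<alpha> M"
proof -
  have "Phi (sw \<xi>) (sw a) (sw b) (sw \<xi> - sw a - sw b) = Phi \<xi> a b (\<xi> - a - b)"
    by (simp add: Phi_def sw_def)
  then show ?thesis by (simp add: Aset_def)
qed

lemma nn_integral_sw2:
  fixes f :: "(real \<times> real) \<times> (real \<times> real) \<Rightarrow> ennreal"
  assumes fm[measurable]: "f \<in> borel_measurable borel"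
  shows "(\<integral>\<^sup>+ p. f (sw (fst p), sw (snd p)) \<partial>lborel) = (\<integral>\<^sup>+ p. f p \<partial>lborel)"
proof -
  have m1: "(\<lambda>p. f (sw (fst p), sw (snd p))) \<in> borel_measurable borel" by measurable
  have "(\<integral>\<^sup>+ p. f (sw (fst p), sw (snd p)) \<partial>lborel) = (\<integral>\<^sup>+ a. \<integral>\<^sup>+ b. f (sw a, sw b) \<partial>lborel \<partial>lborel)"
    using nn_integral_pair_fst[OF m1] by simp
  also have "\<dots> = (\<integral>\<^sup>+ a. \<integral>\<^sup>+ b. f (sw a, b) \<partial>lborel \<partial>lborel)"
  proof (rule nn_integral_cong)
    fix a :: "real \<times> real"
    have mb: "(\<lambda>b. f (sw a, b)) \<in> borel_measurable borel" by measurable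
    show "(\<integral>\<^sup>+ b. f (sw a, sw b) \<partial>lborel) = (\<integral>\<^sup>+ b. f (sw a, b) \<partial>lborel)"
      using nn_integral_swap_pair[OF mb] by (simp add: sw_def)
  qed
  also have "\<dots> = (\<integral>\<^sup>+ b. \<integral>\<^sup>+ a. f (sw a, b) \<partial>lborel \<partial>lborel)"
  proof -
    have "(\<lambda>(a, b). f (sw a, b)) \<in> borel_measurable (lborel \<Otimes>\<^sub>M lborel)"
      unfolding lborel_prod by (simp add: split_beta') measurable
    from lborel_pair.Fubini'[OF this] show ?thesis by simp
  qed
  also have "\<dots> = (\<integral>\<^sup>+ b. \<integral>\<^sup>+ a. f (a, b) \<partial>lborel \<partial>lborel)"
  proof (rule nn_integral_cong)
    fix b :: "real \<times> real"
    have ma: "(\<lambda>a. f (a, b)) \<in> borel_measurable borel" by measurable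
    show "(\<integral>\<^sup>+ a. f (sw a, b) \<partial>lborel) = (\<integral>\<^sup>+ a. f (a, b) \<partial>lborel)"
      using nn_integral_swap_pair[OF ma] by (simp add: sw_def)
  qed
  also have "\<dots> = (\<integral>\<^sup>+ p. f p \<partial>lborel)"
    using nn_integral_pair_snd[OF fm] by simp
  finally show ?thesis .
qed

lemma Kint_sw: "Kint s (sw \<xi>) \<alpha> M = Kint s \<xi> \<alpha> M"
proof -
  have m: "FR s (sw \<xi>) \<alpha> M UNIV \<in> borel_measurable borel" by (intro FR_meas) simp
  have pt: "FR s (sw \<xi>) \<alpha> M UNIV (sw (fst p), sw (snd p)) = FR s \<xi> \<alpha> M UNIV p" for p
  proof -
    have "indicator (Aset (sw \<xi>) \<alpha> M) (sw (fst p), sw (snd p)) = (indicator (Aset \<xi> \<alpha> M) p :: real)"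
      using Aset_sw[of "fst p" "snd p" \<xi> \<alpha> M] by (simp add: indicator_def)
    then show ?thesis by (simp add: FR_def)
  qed
  show ?thesis
    unfolding Kint_def using nn_integral_sw2[OF m] by (simp add: pt)
qed

lemma Kint_le_c2: 
  assumes "s > 3/2"
  shows "Kint s \<xi> \<alpha> M \<le> ennreal ((cI2 s)\<^sup>2)"
proof -
  have "Kint s \<xi> \<alpha> M \<le> (\<integral>\<^sup>+ p. ennreal (wB (2 * s) (fst p)) * ennreal (wB (2 * s) (snd p)) \<partial>lborel)"
    unfolding Kint_def
  proof (rule nn_integral_mono)
    fix p :: "(real \<times> real) \<times> (real \<times> real)"
    have "indicator UNIV p * indicator (Aset \<xi> \<alpha> M) p * wB (2 * s) (fst p) * wB (2 * s) (snd p)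
       \<le> 1 * 1 * wB (2 * s) (fst p) * wB (2 * s) (snd p)"
      by (intro mult_right_mono) (auto simp: indicator_def)
    then show "FR s \<xi> \<alpha> M UNIV p \<le> ennreal (wB (2 * s) (fst p)) * ennreal (wB (2 * s) (snd p))"
      unfolding FR_def by (simp add: ennreal_mult[symmetric] ennreal_leI)
  qed
  also have "\<dots> = (\<integral>\<^sup>+ v. ennreal (wB (2 * s) v) \<partial>lborel) * (\<integral>\<^sup>+ v. ennreal (wB (2 * s) v) \<partial>lborel)"
    by (rule nn_integral_prod_split) measurable
  also have "\<dots> = ennreal ((cI2 s)\<^sup>2)"
    using cI_eqs(2)[OF assms] cI_nonneg by (simp add: ennreal_mult[symmetric] power2_eq_square)
  finally show ?thesis .
qed

definition "CB s = Cx s + 2 * (cI2 s)\<^sup>2"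

lemma Kint_bound:
  fixes s M :: real
  assumes s: "s > 3/2" and M: "M \<ge> 1"
  shows "ennreal ((jb2 \<xi>)\<^sup>2) * Kint s \<xi> \<alpha> M \<le> ennreal (CB s * M)"
proof -
  have Cx0: "Cx s \<ge> 0" unfolding Cx_def using cI_nonneg by simp
  have q0: "2 * (cI2 s)\<^sup>2 \<ge> 0" by simp
  show ?thesis
  proof (cases "norm \<xi> < 1")
    case True
    have j: "(jb2 \<xi>)\<^sup>2 \<le> 2"
    proof -
      have "(norm \<xi>)\<^sup>2 \<le> 1" using True by (intro power_le_one) auto
      then show ?thesis by (simp add: jb2_def)
    qed
    have "ennreal ((jb2 \<xi>)\<^sup>2) * Kint s \<xi> \<alpha> M \<le> ennreal 2 * ennreal ((cI2 s)\<^sup>2)"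
      by (intro mult_mono Kint_le_c2 s ennreal_leI j) auto
    also have "\<dots> = ennreal (2 * (cI2 s)\<^sup>2)" by (simp add: ennreal_mult)
    also have "\<dots> \<le> ennreal (CB s * M)"
    proof (rule ennreal_leI)
      have "2 * (cI2 s)\<^sup>2 \<le> CB s" unfolding CB_def using Cx0 by simp
      also have "\<dots> \<le> CB s * M" using mult_left_mono[OF M, of "CB s"] Cx0 q0 by (simp add: CB_def)
      finally show "2 * (cI2 s)\<^sup>2 \<le> CB s * M" .
    qed
    finally show ?thesis .
  next
    case False
    define N where "N = norm \<xi>"
    have N1: "N \<ge> 1" using False by (simp add: N_def)
    have sq: "N\<^sup>2 = (fst \<xi>)\<^sup>2 + (snd \<xi>)\<^sup>2" by (cases \<xi>) (simp add: N_def norm_Pair)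
    have CxM: "ennreal (Cx s * M) \<le> ennreal (CB s * M)"
      using M by (intro ennreal_leI mult_right_mono) (auto simp: CB_def)
    show ?thesis
    proof (cases "(fst \<xi>)\<^sup>2 \<ge> N\<^sup>2/2")
      case True
      from Kint_xdom[OF s N_def N1 True M] CxM show ?thesis by (rule order_trans)
    next
      case False
      have yd: "(fst (sw \<xi>))\<^sup>2 \<ge> (norm (sw \<xi>))\<^sup>2/2" using False sq by (simp add: N_def)
      have "ennreal ((jb2 (sw \<xi>))\<^sup>2) * Kint s (sw \<xi>) \<alpha> M \<le> ennreal (Cx s * M)"
        by (rule Kint_xdom[OF s refl _ yd M]) (use N1 in \<open>simp add: N_def\<close>)
      then show ?thesis using CxM by (simp add: Kint_sw)
    qed
  qed
qed



lemma nn_integral_reflect: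
  fixes g :: "'a::euclidean_space \<Rightarrow> ennreal"
  assumes [measurable]: "g \<in> borel_measurable borel"
  shows "(\<integral>\<^sup>+ b. g (c - b) \<partial>lborel) = (\<integral>\<^sup>+ b. g b \<partial>lborel)"
proof -
  have "(\<integral>\<^sup>+ b. g b \<partial>lborel) = (\<integral>\<^sup>+ b. g b \<partial>density (distr lborel borel (\<lambda>x. c + (-1) *\<^sub>R x)) (\<lambda>_. \<bar>-1::real\<bar>^DIM('a)))"
    by (subst lborel_affine[of "-1" c, symmetric]) auto
  also have "\<dots> = (\<integral>\<^sup>+ b. g b \<partial>distr lborel borel (\<lambda>x. c + (-1) *\<^sub>R x))"
    by (simp add: density_1)
  also have "\<dots> = (\<integral>\<^sup>+ x. g (c + (-1) *\<^sub>R x) \<partial>lborel)"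
    by (subst nn_integral_distr) auto
  finally show ?thesis by simp
qed

definition EE :: "real \<times> real \<Rightarrow> (real \<times> real \<Rightarrow> real \<times> real \<Rightarrow> real \<times> real \<Rightarrow> ennreal) \<Rightarrow> ennreal" where
  "EE \<xi> h = (\<integral>\<^sup>+ p. h (fst p) (snd p) (\<xi> - fst p - snd p) \<partial>lborel)"

definition meas3 :: "(real \<times> real \<Rightarrow> real \<times> real \<Rightarrow> real \<times> real \<Rightarrow> ennreal) \<Rightarrow> bool" where
  "meas3 h \<longleftrightarrow> (\<lambda>q. h (fst q) (fst (snd q)) (snd (snd q))) \<in> borel_measurable borel"

lemma meas3_comp:
  fixes f1 f2 f3 :: "'z::euclidean_space \<Rightarrow> real \<times> real"
  assumes "meas3 h" "f1 \<in> borel_measurable borel" "f2 \<in> borel_measurable borel" "f3 \<in> borel_measurable borel"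
  shows "(\<lambda>p. h (f1 p) (f2 p) (f3 p)) \<in> borel_measurable borel"
proof -
  have m: "(\<lambda>q. h (fst q) (fst (snd q)) (snd (snd q))) \<in> borel_measurable borel"
    using assms(1) by (simp add: meas3_def)
  have "(\<lambda>p. (f1 p, f2 p, f3 p)) \<in> borel \<rightarrow>\<^sub>M borel"
    using assms(2-4) by (simp add: borel_prod[symmetric])
  from measurable_compose[OF this m] show ?thesis by simp
qed

lemma EE_swap12:
  assumes "meas3 h"
  shows "EE \<xi> (\<lambda>a b c. h b a c) = EE \<xi> h"
proof -
  have m: "(\<lambda>p. h (fst p) (snd p) (\<xi> - fst p - snd p)) \<in> borel_measurable borel"
    by (rule meas3_comp[OF assms]; measurable)
  have "EE \<xi> h = (\<integral>\<^sup>+ p. h (fst (snd p, fst p)) (snd (snd p, fst p)) (\<xi> - fst (snd p, fst p) - snd (snd p, fst p)) \<partial>lborel)"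
    unfolding EE_def by (rule nn_integral_swap_pair[OF m, symmetric])
  also have "\<dots> = EE \<xi> (\<lambda>a b c. h b a c)"
    unfolding EE_def by (simp add: algebra_simps)
  finally show ?thesis ..
qed

lemma EE_swap23:
  assumes "meas3 h"
  shows "EE \<xi> (\<lambda>a b c. h a c b) = EE \<xi> h"
proof -
  have m: "(\<lambda>p. h (fst p) (\<xi> - fst p - snd p) (snd p)) \<in> borel_measurable borel"
    by (rule meas3_comp[OF assms]; measurable)
  have "EE \<xi> (\<lambda>a b c. h a c b) = (\<integral>\<^sup>+ a. \<integral>\<^sup>+ b. h a (\<xi> - a - b) b \<partial>lborel \<partial>lborel)"
    unfolding EE_def using nn_integral_pair_fst[OF m] by simp
  also have "\<dots> = (\<integral>\<^sup>+ a. \<integral>\<^sup>+ b. h a b (\<xi> - a - b) \<partial>lborel \<partial>lborel)"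
  proof (rule nn_integral_cong)
    fix a :: "real \<times> real"
    have mb: "(\<lambda>b. h a (\<xi> - a - b) b) \<in> borel_measurable borel"
      by (rule meas3_comp[OF assms]; measurable)
    have "(\<integral>\<^sup>+ b. h a (\<xi> - a - b) b \<partial>lborel) = (\<integral>\<^sup>+ b. h a (\<xi> - a - ((\<xi> - a) - b)) ((\<xi> - a) - b) \<partial>lborel)"
      by (rule nn_integral_reflect[OF mb, symmetric])
    also have "\<dots> = (\<integral>\<^sup>+ b. h a b (\<xi> - a - b) \<partial>lborel)" by simp
    finally show "(\<integral>\<^sup>+ b. h a (\<xi> - a - b) b \<partial>lborel) = (\<integral>\<^sup>+ b. h a b (\<xi> - a - b) \<partial>lborel)" .
  qed
  also have "\<dots> = EE \<xi> h"
  proof -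
    have m2: "(\<lambda>p. h (fst p) (snd p) (\<xi> - fst p - snd p)) \<in> borel_measurable borel"
      by (rule meas3_comp[OF assms]; measurable)
    show ?thesis unfolding EE_def using nn_integral_pair_fst[OF m2] by simp
  qed
  finally show ?thesis .
qed

lemma EE_swap13:
  assumes "meas3 h"
  shows "EE \<xi> (\<lambda>a b c. h c b a) = EE \<xi> h"
proof -
  have m1: "meas3 (\<lambda>a b c. h c b a)"
    unfolding meas3_def by (rule meas3_comp[OF assms]; measurable)
  have m2: "meas3 (\<lambda>a b c. h c a b)"
    unfolding meas3_def by (rule meas3_comp[OF assms]; measurable)
  have m3: "meas3 (\<lambda>a b c. h b a c)"
    unfolding meas3_def by (rule meas3_comp[OF assms]; measurable)
  have "EE \<xi> (\<lambda>a b c. h c b a) = EE \<xi> (\<lambda>a b c. h c a b)"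
    using EE_swap12[OF m1] by simp
  also have "\<dots> = EE \<xi> (\<lambda>a b c. h b a c)"
    using EE_swap23[OF m2] by simp
  also have "\<dots> = EE \<xi> h"
    using EE_swap12[OF assms] by simp
  finally show ?thesis .
qed



definition HJ :: "real \<Rightarrow> real \<times> real \<Rightarrow> real \<Rightarrow> real \<Rightarrow> real \<times> real \<Rightarrow> real \<times> real \<Rightarrow> real \<times> real \<Rightarrow> ennreal" where
  "HJ s \<xi> \<alpha> M a b c = ennreal ((if \<bar>Phi \<xi> a b c - \<alpha>\<bar> < M then 1 else 0)
      * (jb2 \<xi> powr (2 * s) * (msym \<xi>)\<^sup>2 * wB (2 * s) a * wB (2 * s) b * wB (2 * s) c))"

definition H3 :: "real \<Rightarrow> real \<times> real \<Rightarrow> real \<Rightarrow> real \<Rightarrow> real \<times> real \<Rightarrow> real \<times> real \<Rightarrow> real \<times> real \<Rightarrow> ennreal" where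
  "H3 s \<xi> \<alpha> M a b c = (if norm a \<le> norm c \<and> norm b \<le> norm c then HJ s \<xi> \<alpha> M a b c else 0)"

lemma Phi3_meas[measurable]: "(\<lambda>q. Phi \<xi> (fst q) (fst (snd q)) (snd (snd q))) \<in> borel_measurable borel"
  unfolding Phi_def by (intro borel_measurable_continuous_onI continuous_intros)

lemma norm_meas_rr[measurable]: "(norm :: real \<times> real \<Rightarrow> real) \<in> borel_measurable borel"
  by (intro borel_measurable_continuous_onI continuous_intros)

lemma meas3_HJ: "meas3 (HJ s \<xi> \<alpha> M)"
  unfolding meas3_def HJ_def by measurable

lemma meas3_H3: "meas3 (H3 s \<xi> \<alpha> M)"
  unfolding meas3_def H3_def HJ_def by measurable

lemma Phi_sym: "Phi \<xi> b a c = Phi \<xi> a b c" "Phi \<xi> a c b = Phi \<xi> a b c" "Phi \<xi> c b a = Phi \<xi> a b c"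
  by (simp_all add: Phi_def ac_simps)

lemma HJ_sym: "HJ s \<xi> \<alpha> M c b a = HJ s \<xi> \<alpha> M a b c" "HJ s \<xi> \<alpha> M a c b = HJ s \<xi> \<alpha> M a b c"
  by (simp_all add: HJ_def Phi_sym ac_simps)

lemma HJ_le_H3: "HJ s \<xi> \<alpha> M a b c \<le> H3 s \<xi> \<alpha> M a b c + H3 s \<xi> \<alpha> M c b a + H3 s \<xi> \<alpha> M a c b"
proof -
  consider "norm a \<le> norm c \<and> norm b \<le> norm c" | "norm c \<le> norm a \<and> norm b \<le> norm a" | "norm a \<le> norm b \<and> norm c \<le> norm b"
    by linarith
  then show ?thesis
  proof cases
    case 1 then show ?thesis by (simp add: H3_def)
  next
    case 2 then show ?thesis by (simp add: H3_def HJ_sym)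
  next
    case 3 then show ?thesis by (simp add: H3_def HJ_sym)
  qed
qed

definition Jint :: "real \<Rightarrow> real \<times> real \<Rightarrow> real \<Rightarrow> real \<Rightarrow> ennreal" where
  "Jint s \<xi> \<alpha> M = EE \<xi> (HJ s \<xi> \<alpha> M)"

lemma three_ennreal: "3 * (e::ennreal) = e + (e + e)"
proof -
  have "3 * e = (1 + 1 + 1) * e" by simp
  also have "(1 + 1 + 1) * e = e + e + e" by (simp only: distrib_right mult.left_neutral)
  finally show ?thesis by (simp add: add.assoc)
qed

lemma Jint_le_3H3: "Jint s \<xi> \<alpha> M \<le> 3 * EE \<xi> (H3 s \<xi> \<alpha> M)"
proof -
  let ?h = "H3 s \<xi> \<alpha> M"
  have m: "meas3 ?h" by (rule meas3_H3)
  have mA: "(\<lambda>p. ?h (fst p) (snd p) (\<xi> - fst p - snd p)) \<in> borel_measurable borel"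
    by (rule meas3_comp[OF m]; measurable)
  have mB: "(\<lambda>p. ?h (\<xi> - fst p - snd p) (snd p) (fst p)) \<in> borel_measurable borel"
    by (rule meas3_comp[OF m]; measurable)
  have mC: "(\<lambda>p. ?h (fst p) (\<xi> - fst p - snd p) (snd p)) \<in> borel_measurable borel"
    by (rule meas3_comp[OF m]; measurable)
  have "Jint s \<xi> \<alpha> M \<le> (\<integral>\<^sup>+ p. ?h (fst p) (snd p) (\<xi> - fst p - snd p) + ?h (\<xi> - fst p - snd p) (snd p) (fst p)
        + ?h (fst p) (\<xi> - fst p - snd p) (snd p) \<partial>lborel)"
    unfolding Jint_def EE_def by (intro nn_integral_mono HJ_le_H3)
  also have "\<dots> = (\<integral>\<^sup>+ p. ?h (fst p) (snd p) (\<xi> - fst p - snd p) + ?h (\<xi> - fst p - snd p) (snd p) (fst p) \<partial>lborel)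
        + (\<integral>\<^sup>+ p. ?h (fst p) (\<xi> - fst p - snd p) (snd p) \<partial>lborel)"
    by (rule nn_integral_add) (use mA mB mC in auto)
  also have "(\<integral>\<^sup>+ p. ?h (fst p) (snd p) (\<xi> - fst p - snd p) + ?h (\<xi> - fst p - snd p) (snd p) (fst p) \<partial>lborel)
      = EE \<xi> ?h + EE \<xi> (\<lambda>a b c. ?h c b a)"
    unfolding EE_def by (rule nn_integral_add) (use mA mB in auto)
  also have "(\<integral>\<^sup>+ p. ?h (fst p) (\<xi> - fst p - snd p) (snd p) \<partial>lborel) = EE \<xi> (\<lambda>a b c. ?h a c b)"
    unfolding EE_def by simp
  also note EE_swap13[OF m]
  also note EE_swap23[OF m]
  finally show ?thesis by (simp add: three_ennreal add.assoc)
qed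

lemma jb2_tri:
  assumes "norm a \<le> norm c" "norm b \<le> norm c"
  shows "jb2 (a + b + c) \<le> 3 * jb2 c"
proof -
  have "norm (a + b + c) \<le> norm a + norm b + norm c" by (meson norm_triangle_le order_refl add_mono)
  then have n: "norm (a + b + c) \<le> 3 * norm c" using assms by linarith
  have "(norm (a + b + c))\<^sup>2 \<le> (3 * norm c)\<^sup>2" by (rule power_mono[OF n]) simp
  then have "1 + (norm (a + b + c))\<^sup>2 \<le> 9 * (1 + (norm c)\<^sup>2)" by (simp add: power_mult_distrib)
  then have "sqrt (1 + (norm (a + b + c))\<^sup>2) \<le> sqrt (9 * (1 + (norm c)\<^sup>2))" by (rule real_sqrt_le_mono)
  also have "\<dots> = sqrt 9 * sqrt (1 + (norm c)\<^sup>2)" by (rule real_sqrt_mult)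
  also have "sqrt 9 = (3::real)" using real_sqrt_abs[of "3::real"] by simp
  finally show ?thesis by (simp add: jb2_def)
qed

lemma msym_sq: "(msym \<xi>)\<^sup>2 \<le> 2 * (jb2 \<xi>)\<^sup>2"
proof -
  have "(fst \<xi> + snd \<xi>)\<^sup>2 \<le> 2 * ((fst \<xi>)\<^sup>2 + (snd \<xi>)\<^sup>2)"
  proof -
    have "2 * ((fst \<xi>)\<^sup>2 + (snd \<xi>)\<^sup>2) - (fst \<xi> + snd \<xi>)\<^sup>2 = (fst \<xi> - snd \<xi>)\<^sup>2"
      by (simp add: power2_eq_square algebra_simps)
    then show ?thesis using zero_le_power2[of "fst \<xi> - snd \<xi>"] by linarith
  qed
  then show ?thesis by (simp add: msym_def jb2_sq)
qed

lemma EE_H3_le: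
  assumes s: "s \<ge> 0"
  shows "EE \<xi> (H3 s \<xi> \<alpha> M) \<le> ennreal (2 * 3 powr (2 * s) * (jb2 \<xi>)\<^sup>2) * Kint s \<xi> \<alpha> M"
proof -
  define K where "K = 2 * 3 powr (2 * s) * (jb2 \<xi>)\<^sup>2"
  have K0: "K \<ge> 0" by (simp add: K_def)
  have pt: "H3 s \<xi> \<alpha> M a b (\<xi> - a - b) \<le> ennreal K * FR s \<xi> \<alpha> M UNIV (a, b)" for a b
  proof (cases "norm a \<le> norm (\<xi> - a - b) \<and> norm b \<le> norm (\<xi> - a - b) \<and> \<bar>Phi \<xi> a b (\<xi> - a - b) - \<alpha>\<bar> < M")
    case False
    then show ?thesis by (auto simp: H3_def HJ_def)
  next
    case True
    let ?c = "\<xi> - a - b"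
    have j3: "jb2 \<xi> \<le> 3 * jb2 ?c" using jb2_tri[of a ?c b] True by simp
    have p1: "jb2 \<xi> powr (2 * s) \<le> 3 powr (2 * s) * jb2 ?c powr (2 * s)"
    proof -
      have "jb2 \<xi> powr (2 * s) \<le> (3 * jb2 ?c) powr (2 * s)"
        by (rule powr_mono2) (use s j3 jb2_pos[of \<xi>] in auto)
      also have "\<dots> = 3 powr (2 * s) * jb2 ?c powr (2 * s)" by (simp add: powr_mult jb2_pos less_imp_le)
      finally show ?thesis .
    qed
    have p2: "jb2 \<xi> powr (2 * s) * wB (2 * s) ?c \<le> 3 powr (2 * s)"
    proof -
      have "jb2 \<xi> powr (2 * s) * wB (2 * s) ?c \<le> 3 powr (2 * s) * jb2 ?c powr (2 * s) * wB (2 * s) ?c"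
        by (intro mult_right_mono p1) simp
      also have "3 powr (2 * s) * jb2 ?c powr (2 * s) * wB (2 * s) ?c = 3 powr (2 * s)"
      proof -
        have "jb2 ?c powr (2 * s) * wB (2 * s) ?c = 1"
          by (simp add: wB_def powr_add[symmetric])
        then show ?thesis by (simp add: mult.assoc)
      qed
      finally show ?thesis .
    qed
    have "jb2 \<xi> powr (2 * s) * (msym \<xi>)\<^sup>2 * wB (2 * s) a * wB (2 * s) b * wB (2 * s) ?c
        = (jb2 \<xi> powr (2 * s) * wB (2 * s) ?c) * (msym \<xi>)\<^sup>2 * (wB (2 * s) a * wB (2 * s) b)"
      by (simp add: ac_simps)
    also have "\<dots> \<le> 3 powr (2 * s) * (2 * (jb2 \<xi>)\<^sup>2) * (wB (2 * s) a * wB (2 * s) b)"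
      by (intro mult_mono p2 msym_sq) auto
    also have "\<dots> = K * (wB (2 * s) a * wB (2 * s) b)" by (simp add: K_def ac_simps)
    finally have "jb2 \<xi> powr (2 * s) * (msym \<xi>)\<^sup>2 * wB (2 * s) a * wB (2 * s) b * wB (2 * s) ?c
        \<le> K * (wB (2 * s) a * wB (2 * s) b)" .
    moreover have "(a, b) \<in> Aset \<xi> \<alpha> M" using True by (simp add: Aset_def)
    ultimately show ?thesis using True K0
      by (simp add: H3_def HJ_def FR_def ennreal_mult[symmetric] ennreal_leI mult.assoc)
  qed
  have "EE \<xi> (H3 s \<xi> \<alpha> M) \<le> (\<integral>\<^sup>+ p. ennreal K * FR s \<xi> \<alpha> M UNIV p \<partial>lborel)"
    unfolding EE_def by (rule nn_integral_mono) (use pt in auto)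
  also have "\<dots> = ennreal K * Kint s \<xi> \<alpha> M"
    unfolding Kint_def by (rule nn_integral_cmult) (use FR_meas[of UNIV s \<xi> \<alpha> M] in simp)
  finally show ?thesis unfolding K_def .
qed



definition GG :: "real \<Rightarrow> (real \<times> real \<Rightarrow> complex) \<Rightarrow> real \<times> real \<Rightarrow> ennreal" where
  "GG s f v = ennreal (jb2 v powr (2 * s) * (cmod (f v))\<^sup>2)"

definition Qint :: "real \<Rightarrow> (real \<times> real \<Rightarrow> complex) \<Rightarrow> (real \<times> real \<Rightarrow> complex) \<Rightarrow> (real \<times> real \<Rightarrow> complex) \<Rightarrow> real \<times> real \<Rightarrow> ennreal" where
  "Qint s f1 f2 f3 \<xi> = EE \<xi> (\<lambda>a b c. GG s f1 a * GG s f2 b * GG s f3 c)"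

lemma pointwise_CS:
  fixes f1 f2 f3 :: "real \<times> real \<Rightarrow> complex"
  assumes [measurable]: "f1 \<in> borel_measurable borel" "f2 \<in> borel_measurable borel" "f3 \<in> borel_measurable borel"
  shows "ennreal (jb2 \<xi> powr (2 * s) * (cmod (T_hat \<alpha> M f1 f2 f3 \<xi>))\<^sup>2) \<le> Jint s \<xi> \<alpha> M * Qint s f1 f2 f3 \<xi>"
proof -
  define A where "A = Aset \<xi> \<alpha> M"
  have Am[measurable]: "A \<in> sets borel" unfolding A_def by simp
  define h where "h = (\<lambda>p. (indicator A p :: complex) * complex_of_real (msym \<xi>) * f1 (fst p) * f2 (snd p) * f3 (\<xi> - fst p - snd p))"
  have T: "T_hat \<alpha> M f1 f2 f3 \<xi> = integral\<^sup>L lborel h"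
    unfolding T_hat_def h_def A_def Aset_def by simp
  have hm[measurable]: "h \<in> borel_measurable borel" unfolding h_def by measurable
  define u where "u = (\<lambda>p. indicator A p * (jb2 \<xi> powr s * \<bar>msym \<xi>\<bar> * jb2 (fst p) powr (-s)
      * jb2 (snd p) powr (-s) * jb2 (\<xi> - fst p - snd p) powr (-s)))"
  define v where "v = (\<lambda>p. jb2 (fst p) powr s * cmod (f1 (fst p)) * (jb2 (snd p) powr s * cmod (f2 (snd p)))
      * (jb2 (\<xi> - fst p - snd p) powr s * cmod (f3 (\<xi> - fst p - snd p))))"
  have um[measurable]: "u \<in> borel_measurable borel" unfolding u_def by measurable
  have vm[measurable]: "v \<in> borel_measurable borel" unfolding v_def by measurable
  have u0: "u p \<ge> 0" for p unfolding u_def by simp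
  have v0: "v p \<ge> 0" for p unfolding v_def by simp
  have inv: "jb2 w powr (-s) * jb2 w powr s = 1" for w by (simp add: powr_add[symmetric])
  have uv: "jb2 \<xi> powr s * norm (h p) = u p * v p" for p
  proof -
    have "norm (h p) = indicator A p * \<bar>msym \<xi>\<bar> * cmod (f1 (fst p)) * cmod (f2 (snd p)) * cmod (f3 (\<xi> - fst p - snd p))"
      unfolding h_def by (simp add: norm_mult indicator_def)
    moreover have "u p * v p = indicator A p * (jb2 \<xi> powr s * \<bar>msym \<xi>\<bar>)
        * ((jb2 (fst p) powr (-s) * jb2 (fst p) powr s) * (jb2 (snd p) powr (-s) * jb2 (snd p) powr s)
           * (jb2 (\<xi> - fst p - snd p) powr (-s) * jb2 (\<xi> - fst p - snd p) powr s))
        * (cmod (f1 (fst p)) * cmod (f2 (snd p)) * cmod (f3 (\<xi> - fst p - snd p)))"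
      unfolding u_def v_def by (simp add: ac_simps)
    ultimately show ?thesis by (simp only: inv) (simp add: ac_simps)
  qed
  have u2: "ennreal (u p) ^ 2 = HJ s \<xi> \<alpha> M (fst p) (snd p) (\<xi> - fst p - snd p)" for p
  proof -
    have pw: "(jb2 w powr (-s))\<^sup>2 = wB (2 * s) w" for w
      by (simp add: wB_def power2_eq_square powr_add[symmetric])
    have pw2: "(jb2 \<xi> powr s)\<^sup>2 = jb2 \<xi> powr (2 * s)"
      by (simp add: power2_eq_square powr_add[symmetric])
    have "(u p)\<^sup>2 = (indicator A p)\<^sup>2 * ((jb2 \<xi> powr s)\<^sup>2 * (\<bar>msym \<xi>\<bar>)\<^sup>2 * (jb2 (fst p) powr (-s))\<^sup>2
      * (jb2 (snd p) powr (-s))\<^sup>2 * (jb2 (\<xi> - fst p - snd p) powr (-s))\<^sup>2)"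
      unfolding u_def by (simp add: power_mult_distrib)
    also have "\<dots> = (if \<bar>Phi \<xi> (fst p) (snd p) (\<xi> - fst p - snd p) - \<alpha>\<bar> < M then 1 else 0)
      * (jb2 \<xi> powr (2 * s) * (msym \<xi>)\<^sup>2 * wB (2 * s) (fst p) * wB (2 * s) (snd p) * wB (2 * s) (\<xi> - fst p - snd p))"
      unfolding pw pw2 by (simp add: A_def Aset_def indicator_def)
    finally have e: "(u p)\<^sup>2 = (if \<bar>Phi \<xi> (fst p) (snd p) (\<xi> - fst p - snd p) - \<alpha>\<bar> < M then 1 else 0)
      * (jb2 \<xi> powr (2 * s) * (msym \<xi>)\<^sup>2 * wB (2 * s) (fst p) * wB (2 * s) (snd p) * wB (2 * s) (\<xi> - fst p - snd p))" .
    show ?thesis unfolding HJ_def e[symmetric] by (simp add: ennreal_power u0)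
  qed
  have v2: "ennreal (v p) ^ 2 = GG s f1 (fst p) * GG s f2 (snd p) * GG s f3 (\<xi> - fst p - snd p)" for p
  proof -
    have pw: "(jb2 w powr s * cmod (g w))\<^sup>2 = jb2 w powr (2 * s) * (cmod (g w))\<^sup>2" for w and g :: "real \<times> real \<Rightarrow> complex"
      by (simp add: power2_eq_square powr_add[symmetric] ac_simps)
    have e: "(v p)\<^sup>2 = (jb2 (fst p) powr (2 * s) * (cmod (f1 (fst p)))\<^sup>2)
        * (jb2 (snd p) powr (2 * s) * (cmod (f2 (snd p)))\<^sup>2)
        * (jb2 (\<xi> - fst p - snd p) powr (2 * s) * (cmod (f3 (\<xi> - fst p - snd p)))\<^sup>2)"
    proof -
      have sq3: "(x * y * z)\<^sup>2 = x\<^sup>2 * y\<^sup>2 * z\<^sup>2" for x y z :: real by (simp add: power_mult_distrib)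
      show ?thesis unfolding v_def sq3 pw ..
    qed
    have "ennreal (v p) ^ 2 = ennreal ((v p)\<^sup>2)" using v0 by (simp add: ennreal_power)
    also have "\<dots> = GG s f1 (fst p) * GG s f2 (snd p) * GG s f3 (\<xi> - fst p - snd p)"
      unfolding e GG_def by (simp add: ennreal_mult)
    finally show ?thesis .
  qed
  have bound: "ennreal (jb2 \<xi> powr s * cmod (T_hat \<alpha> M f1 f2 f3 \<xi>)) \<le> (\<integral>\<^sup>+ p. ennreal (u p) * ennreal (v p) \<partial>lborel)"
  proof (cases "integrable lborel h")
    case True
    have "ennreal (cmod (T_hat \<alpha> M f1 f2 f3 \<xi>)) \<le> (\<integral>\<^sup>+ p. ennreal (norm (h p)) \<partial>lborel)"
      unfolding T by (rule integral_norm_bound_ennreal[OF True])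
    then have "ennreal (jb2 \<xi> powr s) * ennreal (cmod (T_hat \<alpha> M f1 f2 f3 \<xi>))
        \<le> ennreal (jb2 \<xi> powr s) * (\<integral>\<^sup>+ p. ennreal (norm (h p)) \<partial>lborel)"
      by (rule mult_left_mono) simp
    also have "\<dots> = (\<integral>\<^sup>+ p. ennreal (jb2 \<xi> powr s) * ennreal (norm (h p)) \<partial>lborel)"
      by (rule nn_integral_cmult[symmetric]) measurable
    also have "\<dots> = (\<integral>\<^sup>+ p. ennreal (u p) * ennreal (v p) \<partial>lborel)"
      by (intro nn_integral_cong) (simp add: ennreal_mult[symmetric] uv u0 v0)
    finally show ?thesis by (simp add: ennreal_mult)
  next
    case False
    then have "T_hat \<alpha> M f1 f2 f3 \<xi> = 0" unfolding T by (rule not_integrable_integral_eq)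
    then show ?thesis by simp
  qed
  have "ennreal (jb2 \<xi> powr (2 * s) * (cmod (T_hat \<alpha> M f1 f2 f3 \<xi>))\<^sup>2)
      = (ennreal (jb2 \<xi> powr s * cmod (T_hat \<alpha> M f1 f2 f3 \<xi>)))\<^sup>2"
  proof -
    have r: "jb2 \<xi> powr (2 * s) * (cmod (T_hat \<alpha> M f1 f2 f3 \<xi>))\<^sup>2 = (jb2 \<xi> powr s * cmod (T_hat \<alpha> M f1 f2 f3 \<xi>))\<^sup>2"
      by (simp add: power_mult_distrib power2_eq_square powr_add[symmetric])
    show ?thesis unfolding r by (rule ennreal_power[symmetric]) simp
  qed
  also have "\<dots> \<le> (\<integral>\<^sup>+ p. ennreal (u p) * ennreal (v p) \<partial>lborel)\<^sup>2"
    by (rule power_mono[OF bound]) simp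
  also have "\<dots> \<le> (\<integral>\<^sup>+ p. ennreal (u p) ^ 2 \<partial>lborel) * (\<integral>\<^sup>+ p. ennreal (v p) ^ 2 \<partial>lborel)"
    by (rule Cauchy_Schwarz_nn_integral) measurable
  also have "\<dots> = Jint s \<xi> \<alpha> M * Qint s f1 f2 f3 \<xi>"
    unfolding Jint_def Qint_def EE_def by (simp only: u2 v2)
  finally show ?thesis .
qed



lemma nn_integral_translate:
  fixes g :: "'a::euclidean_space \<Rightarrow> ennreal"
  assumes [measurable]: "g \<in> borel_measurable borel"
  shows "(\<integral>\<^sup>+ x. g (x - c) \<partial>lborel) = (\<integral>\<^sup>+ x. g x \<partial>lborel)"
proof -
  have "(\<integral>\<^sup>+ x. g x \<partial>lborel) = (\<integral>\<^sup>+ x. g x \<partial>distr lborel borel ((+) (-c)))"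
    by (simp add: lborel_distr_plus)
  also have "\<dots> = (\<integral>\<^sup>+ x. g (-c + x) \<partial>lborel)"
    by (subst nn_integral_distr) auto
  finally show ?thesis by simp
qed

lemma GG_meas[measurable]: "f \<in> borel_measurable borel \<Longrightarrow> GG s f \<in> borel_measurable borel"
  unfolding GG_def by measurable

lemma Hs_sq_GG: "Hs_sq s f = (\<integral>\<^sup>+ v. GG s f v \<partial>lborel)"
  by (simp add: Hs_sq_def GG_def)

lemma Qint_total:
  fixes f1 f2 f3 :: "real \<times> real \<Rightarrow> complex"
  assumes m[measurable]: "f1 \<in> borel_measurable borel" "f2 \<in> borel_measurable borel" "f3 \<in> borel_measurable borel"
  shows "(\<integral>\<^sup>+ \<xi>. Qint s f1 f2 f3 \<xi> \<partial>lborel) = Hs_sq s f1 * Hs_sq s f2 * Hs_sq s f3"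
proof -
  define F where "F = (\<lambda>z::(real \<times> real) \<times> ((real \<times> real) \<times> (real \<times> real)).
      GG s f1 (fst (snd z)) * GG s f2 (snd (snd z)) * GG s f3 (fst z - fst (snd z) - snd (snd z)))"
  have Fm: "F \<in> borel_measurable borel" unfolding F_def by measurable
  have "(\<integral>\<^sup>+ \<xi>. Qint s f1 f2 f3 \<xi> \<partial>lborel) = (\<integral>\<^sup>+ \<xi>. \<integral>\<^sup>+ p. F (\<xi>, p) \<partial>lborel \<partial>lborel)"
    unfolding Qint_def EE_def F_def by simp
  also have "\<dots> = (\<integral>\<^sup>+ z. F z \<partial>lborel)"
    by (rule nn_integral_pair_fst[OF Fm, symmetric])
  also have "\<dots> = (\<integral>\<^sup>+ p. \<integral>\<^sup>+ \<xi>. F (\<xi>, p) \<partial>lborel \<partial>lborel)"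
    by (rule nn_integral_pair_snd[OF Fm])
  also have "\<dots> = (\<integral>\<^sup>+ p. GG s f1 (fst p) * GG s f2 (snd p) * Hs_sq s f3 \<partial>lborel)"
  proof (rule nn_integral_cong)
    fix p :: "(real \<times> real) \<times> (real \<times> real)"
    have "(\<integral>\<^sup>+ \<xi>. F (\<xi>, p) \<partial>lborel) = (\<integral>\<^sup>+ \<xi>. GG s f1 (fst p) * GG s f2 (snd p) * GG s f3 (\<xi> - (fst p + snd p)) \<partial>lborel)"
      unfolding F_def by (simp add: algebra_simps)
    also have "\<dots> = GG s f1 (fst p) * GG s f2 (snd p) * (\<integral>\<^sup>+ \<xi>. GG s f3 (\<xi> - (fst p + snd p)) \<partial>lborel)"
      by (rule nn_integral_cmult) measurable
    also have "(\<integral>\<^sup>+ \<xi>. GG s f3 (\<xi> - (fst p + snd p)) \<partial>lborel) = Hs_sq s f3"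
      unfolding Hs_sq_GG by (rule nn_integral_translate) measurable
    finally show "(\<integral>\<^sup>+ \<xi>. F (\<xi>, p) \<partial>lborel) = GG s f1 (fst p) * GG s f2 (snd p) * Hs_sq s f3" .
  qed
  also have "\<dots> = (\<integral>\<^sup>+ p. GG s f1 (fst p) * GG s f2 (snd p) \<partial>lborel) * Hs_sq s f3"
    by (rule nn_integral_multc) measurable
  also have "(\<integral>\<^sup>+ p. GG s f1 (fst p) * GG s f2 (snd p) \<partial>lborel) = Hs_sq s f1 * Hs_sq s f2"
    unfolding Hs_sq_GG by (rule nn_integral_prod_split) measurable
  finally show ?thesis .
qed



lemma Kint_mono: "M \<le> M' \<Longrightarrow> Kint s \<xi> \<alpha> M \<le> Kint s \<xi> \<alpha> M'"
  unfolding Kint_def FR_def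
  by (intro nn_integral_mono ennreal_leI mult_right_mono) (auto simp: indicator_def Aset_def)

lemma Jint_bound:
  assumes s: "s > 3/2"
  shows "Jint s \<xi> \<alpha> M \<le> ennreal (6 * 3 powr (2 * s) * CB s * max 1 M)"
proof -
  define M' where "M' = max 1 M"
  have M': "M' \<ge> 1" "M \<le> M'" by (auto simp: M'_def)
  have "Jint s \<xi> \<alpha> M \<le> 3 * EE \<xi> (H3 s \<xi> \<alpha> M)" by (rule Jint_le_3H3)
  also have "\<dots> \<le> 3 * (ennreal (2 * 3 powr (2 * s) * (jb2 \<xi>)\<^sup>2) * Kint s \<xi> \<alpha> M)"
    by (intro mult_left_mono EE_H3_le) (use s in auto)
  also have "\<dots> \<le> 3 * (ennreal (2 * 3 powr (2 * s) * (jb2 \<xi>)\<^sup>2) * Kint s \<xi> \<alpha> M')"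
    by (intro mult_left_mono Kint_mono M') auto
  also have "3 * (ennreal (2 * 3 powr (2 * s) * (jb2 \<xi>)\<^sup>2) * Kint s \<xi> \<alpha> M')
      = 3 * (ennreal (2 * 3 powr (2 * s)) * (ennreal ((jb2 \<xi>)\<^sup>2) * Kint s \<xi> \<alpha> M'))"
    by (simp add: ennreal_mult mult.assoc)
  also have "\<dots> \<le> 3 * (ennreal (2 * 3 powr (2 * s)) * ennreal (CB s * M'))"
    by (intro mult_left_mono Kint_bound s M') auto
  also have "3 * (ennreal (2 * 3 powr (2 * s)) * ennreal (CB s * M')) = ennreal (6 * 3 powr (2 * s) * CB s * M')"
  proof -
    have CB0: "CB s \<ge> 0" unfolding CB_def Cx_def using cI_nonneg by simp
    have e1: "6 * 3 powr (2 * s) * CB s * M' = 3 * ((2 * 3 powr (2 * s)) * (CB s * M'))"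
      by (simp add: algebra_simps)
    have "ennreal (6 * 3 powr (2 * s) * CB s * M') = 3 * (ennreal (2 * 3 powr (2 * s)) * ennreal (CB s * M'))"
      unfolding e1 using CB0 M' by (simp add: ennreal_mult mult.assoc[symmetric])
    then show ?thesis by simp
  qed
  finally show ?thesis unfolding M'_def .
qed

lemma Hs_sq_eq:
  assumes "f \<in> Hs_hat s"
  shows "Hs_sq s f = ennreal ((Hs_norm s f)\<^sup>2)"
proof -
  have "Hs_sq s f < \<infinity>" using assms by (simp add: Hs_hat_def)
  then show ?thesis by (simp add: Hs_norm_def ennreal_enn2real less_top)
qed

lemma Qint_meas:
  fixes f1 f2 f3 :: "real \<times> real \<Rightarrow> complex"
  assumes m[measurable]: "f1 \<in> borel_measurable borel" "f2 \<in> borel_measurable borel" "f3 \<in> borel_measurable borel"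
  shows "Qint s f1 f2 f3 \<in> borel_measurable lborel"
proof -
  define F where "F = (\<lambda>z::(real \<times> real) \<times> ((real \<times> real) \<times> (real \<times> real)).
      GG s f1 (fst (snd z)) * GG s f2 (snd (snd z)) * GG s f3 (fst z - fst (snd z) - snd (snd z)))"
  have Fm: "F \<in> borel_measurable (lborel \<Otimes>\<^sub>M lborel)" unfolding F_def lborel_prod by measurable
  have "(\<lambda>\<xi>. \<integral>\<^sup>+ p. F (\<xi>, p) \<partial>lborel) \<in> borel_measurable lborel"
    by (rule lborel.borel_measurable_nn_integral_fst[OF Fm])
  moreover have "Qint s f1 f2 f3 = (\<lambda>\<xi>. \<integral>\<^sup>+ p. F (\<xi>, p) \<partial>lborel)"
    unfolding Qint_def EE_def F_def by simp
  ultimately show ?thesis by simp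
qed

theorem lemma10:
  fixes s :: real
  assumes "s > 3/2"
  shows "\<forall>\<delta>>0. \<exists>C>0. \<forall>\<alpha> M f1 f2 f3.
           f1 \<in> Hs_hat s \<and> f2 \<in> Hs_hat s \<and> f3 \<in> Hs_hat s \<longrightarrow>
           Hs_sq s (T_hat \<alpha> M f1 f2 f3)
             \<le> ennreal ((C * jb \<alpha> powr \<delta> * jb M powr (1/2 + \<delta>)
                         * Hs_norm s f1 * Hs_norm s f2 * Hs_norm s f3)\<^sup>2)"
proof (intro allI impI)
  fix \<delta> :: real
  assume \<delta>: "\<delta> > 0"
  define C0 where "C0 = 6 * 3 powr (2 * s) * CB s"
  have C00: "C0 \<ge> 0" unfolding C0_def CB_def Cx_def using cI_nonneg by simp
  define C where "C = sqrt C0 + 1"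
  have Cpos: "C > 0"
  proof -
    have "sqrt C0 \<ge> 0" using C00 by simp
    then show ?thesis unfolding C_def by linarith
  qed
  have CC: "C0 \<le> C\<^sup>2"
  proof -
    have "C0 = (sqrt C0)\<^sup>2" using C00 by simp
    also have "\<dots> \<le> C\<^sup>2" unfolding C_def by (rule power_mono) (use C00 in auto)
    finally show ?thesis .
  qed
  show "\<exists>C>0. \<forall>\<alpha> M f1 f2 f3.
           f1 \<in> Hs_hat s \<and> f2 \<in> Hs_hat s \<and> f3 \<in> Hs_hat s \<longrightarrow>
           Hs_sq s (T_hat \<alpha> M f1 f2 f3)
             \<le> ennreal ((C * jb \<alpha> powr \<delta> * jb M powr (1/2 + \<delta>)
                         * Hs_norm s f1 * Hs_norm s f2 * Hs_norm s f3)\<^sup>2)"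
  proof (intro exI[of _ C] conjI allI impI Cpos)
    fix \<alpha> M :: real and f1 f2 f3 :: "real \<times> real \<Rightarrow> complex"
    assume f: "f1 \<in> Hs_hat s \<and> f2 \<in> Hs_hat s \<and> f3 \<in> Hs_hat s"
    have m[measurable]: "f1 \<in> borel_measurable borel" "f2 \<in> borel_measurable borel" "f3 \<in> borel_measurable borel"
      using f by (auto simp: Hs_hat_def)
    define n1 where "n1 = Hs_norm s f1"
    define n2 where "n2 = Hs_norm s f2"
    define n3 where "n3 = Hs_norm s f3"
    define a where "a = jb \<alpha> powr \<delta>"
    define b where "b = jb M powr (1/2 + \<delta>)"
    have "Hs_sq s (T_hat \<alpha> M f1 f2 f3) = (\<integral>\<^sup>+ \<xi>. ennreal (jb2 \<xi> powr (2 * s) * (cmod (T_hat \<alpha> M f1 f2 f3 \<xi>))\<^sup>2) \<partial>lborel)"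
      by (simp add: Hs_sq_def)
    also have "\<dots> \<le> (\<integral>\<^sup>+ \<xi>. Jint s \<xi> \<alpha> M * Qint s f1 f2 f3 \<xi> \<partial>lborel)"
      by (intro nn_integral_mono pointwise_CS m)
    also have "\<dots> \<le> (\<integral>\<^sup>+ \<xi>. ennreal (C0 * max 1 M) * Qint s f1 f2 f3 \<xi> \<partial>lborel)"
      by (intro nn_integral_mono mult_right_mono) (use Jint_bound[OF assms] in \<open>auto simp: C0_def\<close>)
    also have "\<dots> = ennreal (C0 * max 1 M) * (\<integral>\<^sup>+ \<xi>. Qint s f1 f2 f3 \<xi> \<partial>lborel)"
      by (rule nn_integral_cmult) (rule Qint_meas[OF m])
    also have "\<dots> = ennreal (C0 * max 1 M) * (ennreal (n1\<^sup>2) * ennreal (n2\<^sup>2) * ennreal (n3\<^sup>2))"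
      unfolding Qint_total[OF m] using f by (simp add: Hs_sq_eq n1_def n2_def n3_def)
    also have "\<dots> = ennreal (C0 * max 1 M * (n1\<^sup>2 * n2\<^sup>2 * n3\<^sup>2))"
      using C00 by (simp add: ennreal_mult)
    also have "\<dots> \<le> ennreal ((C * a * b * n1 * n2 * n3)\<^sup>2)"
    proof (rule ennreal_leI)
      have a1: "a\<^sup>2 \<ge> 1"
      proof -
        have "a \<ge> 1" unfolding a_def by (rule ge_one_powr_ge_zero) (use \<delta> jb_ge1 in auto)
        then show ?thesis by (simp add: one_le_power)
      qed
      have b1: "b\<^sup>2 \<ge> max 1 M"
      proof -
        have "b\<^sup>2 = jb M powr (1 + 2 * \<delta>)" unfolding b_def
          by (simp add: power2_eq_square powr_add[symmetric])
        also have "\<dots> \<ge> jb M powr 1"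
          by (rule powr_mono) (use \<delta> jb_ge1 in auto)
        also have "jb M powr 1 = jb M" using jb_pos[of M] by simp
        finally have "b\<^sup>2 \<ge> jb M" .
        moreover have "jb M \<ge> max 1 M" using jb_ge1[of M] jb_ge_abs[of M] by auto
        ultimately show ?thesis by linarith
      qed
      have P0: "n1\<^sup>2 * n2\<^sup>2 * n3\<^sup>2 \<ge> 0" by simp
      have "C0 * max 1 M \<le> C\<^sup>2 * b\<^sup>2"
        by (intro mult_mono CC b1) (use C00 in auto)
      also have "\<dots> \<le> C\<^sup>2 * b\<^sup>2 * a\<^sup>2"
        using mult_left_mono[OF a1, of "C\<^sup>2 * b\<^sup>2"] by simp
      finally have "C0 * max 1 M * (n1\<^sup>2 * n2\<^sup>2 * n3\<^sup>2) \<le> C\<^sup>2 * b\<^sup>2 * a\<^sup>2 * (n1\<^sup>2 * n2\<^sup>2 * n3\<^sup>2)"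
        by (rule mult_right_mono[OF _ P0])
      also have "\<dots> = (C * a * b * n1 * n2 * n3)\<^sup>2" by (simp add: power_mult_distrib ac_simps)
      finally show "C0 * max 1 M * (n1\<^sup>2 * n2\<^sup>2 * n3\<^sup>2) \<le> (C * a * b * n1 * n2 * n3)\<^sup>2" .
    qed
    finally show "Hs_sq s (T_hat \<alpha> M f1 f2 f3)
             \<le> ennreal ((C * jb \<alpha> powr \<delta> * jb M powr (1/2 + \<delta>)
                         * Hs_norm s f1 * Hs_norm s f2 * Hs_norm s f3)\<^sup>2)"
      by (simp add: a_def b_def n1_def n2_def n3_def)
  qed
qed


end
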